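(* Let $E$ be a realizable matrix of rank $k$, and let $A$ be a $(0,1)$ matrix such that $A$ and $A+E$ are Gram mates. Then there exist $k$ positive singular values of $A$ such that the set of their corresponding right (resp. left) singular vectors is a basis of $\mathrm{Row}(E)$ (resp. $\mathrm{Col}(E)$); that is, there is a singular value decomposition $A=U\Sigma V^T$ and $k$ indices $i$ with $\Sigma_{ii}>0$ such that the corresponding $k$ columns of $V$ form a basis of $\mathrm{Row}(E)$ and the corresponding $k$ columns of $U$ form a basis of $\mathrm{Col}(E)$.
   Context: Two $(0,1)$ matrices $A,B$ are Gram mates if $AA^T=BB^T$, $A^TA=B^TB$ and $A\neq B$. A $(0,1,-1)$ matrix $E$ with $E\mathbf 1=0$ and $\mathbf 1^TE=0^T$ is realizable if there is a $(0,1)$ matrix $A$ such that $A$ and $A+E$ are Gram mates. *)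

theory Defs
  imports "Jordan_Normal_Form.DL_Rank"
begin

definition zero_one_mat :: "real mat \<Rightarrow> bool" where
  "zero_one_mat A \<longleftrightarrow>
     (\<forall>i < dim_row A. \<forall>j < dim_col A. A $$ (i,j) = 0 \<or> A $$ (i,j) = 1)"

definition signed_mat :: "real mat \<Rightarrow> bool" where
  "signed_mat E \<longleftrightarrow>
     (\<forall>i < dim_row E. \<forall>j < dim_col E. E $$ (i,j) \<in> {-1, 0, 1})"

definition gram_mates :: "real mat \<Rightarrow> real mat \<Rightarrow> bool" where
  "gram_mates A B \<longleftrightarrow>
     zero_one_mat A \<and> zero_one_mat B \<and>
     dim_row A = dim_row B \<and> dim_col A = dim_col B \<and>
     A * A\<^sup>T = B * B\<^sup>T \<and> A\<^sup>T * A = B\<^sup>T * B \<and> A \<noteq> B"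

definition realizable :: "real mat \<Rightarrow> bool" where
  "realizable E \<longleftrightarrow>
     signed_mat E \<and>
     E *\<^sub>v (vec (dim_col E) (\<lambda>_. 1)) = 0\<^sub>v (dim_row E) \<and>
     E\<^sup>T *\<^sub>v (vec (dim_row E) (\<lambda>_. 1)) = 0\<^sub>v (dim_col E) \<and>
     (\<exists>A. A \<in> carrier_mat (dim_row E) (dim_col E) \<and> zero_one_mat A \<and> gram_mates A (A + E))"

definition mat_rank :: "real mat \<Rightarrow> nat" where
  "mat_rank E = vec_space.rank (dim_row E) E"

definition basis_of :: "nat \<Rightarrow> real vec set \<Rightarrow> real vec set \<Rightarrow> bool" where
  "basis_of n W S \<longleftrightarrow>
     S \<subseteq> W \<and> finite S \<and>
     module.lin_indpt class_ring (module_vec TYPE(real) n) S \<and>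
     LinearCombinations.module.span class_ring (module_vec TYPE(real) n) S = W"

definition Row :: "real mat \<Rightarrow> real vec set" where
  "Row E = vec_space.row_space (dim_col E) E"

definition Col :: "real mat \<Rightarrow> real vec set" where
  "Col E = vec_space.col_space (dim_row E) E"

definition svd :: "real mat \<Rightarrow> real mat \<Rightarrow> real mat \<Rightarrow> real mat \<Rightarrow> bool" where
  "svd A U S V \<longleftrightarrow>
     (let m = dim_row A; n = dim_col A in
       U \<in> carrier_mat m m \<and> V \<in> carrier_mat n n \<and> S \<in> carrier_mat m n \<and>
       U\<^sup>T * U = 1\<^sub>m m \<and> V\<^sup>T * V = 1\<^sub>m n \<and>
       (\<forall>i < m. \<forall>j < n. i \<noteq> j \<longrightarrow> S $$ (i,j) = 0) \<and>
       (\<forall>i < min m n. 0 \<le> S $$ (i,i)) \<and>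
       (\<forall>i j. i \<le> j \<longrightarrow> j < min m n \<longrightarrow> S $$ (j,j) \<le> S $$ (i,i)) \<and>
       A = U * S * V\<^sup>T)"

end

theory Submission imports Defs "Jordan_Normal_Form.Char_Poly" begin


lemma real_conj_vec: "conjugate (v :: real vec) = v"
  by (auto simp: conjugate_vec_def conjugate_real_def)

lemma sq_ge0: "(v :: real vec) \<bullet> v \<ge> 0"
  using conjugate_square_ge_0_vec[of v] by (simp add: real_conj_vec)

lemma sq_eq0: "(v :: real vec) \<in> carrier_vec n \<Longrightarrow> (v \<bullet> v = 0) = (v = 0\<^sub>v n)"
  using conjugate_square_eq_0_vec[of v n] by (simp add: real_conj_vec)

lemma kernel_nontriv:
  fixes A :: "real mat"
  assumes A: "A \<in> carrier_mat r n" and rn: "r < n"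
  shows "\<exists>x\<in>carrier_vec n. x \<noteq> 0\<^sub>v n \<and> A *\<^sub>v x = 0\<^sub>v r"
proof (cases "r = 0")
  case True
  have "unit_vec n 0 \<in> carrier_vec n" "unit_vec n 0 \<noteq> (0\<^sub>v n :: real vec)"
    using rn True by (auto simp: unit_vec_def vec_eq_iff)
  moreover have "A *\<^sub>v unit_vec n 0 = 0\<^sub>v r" using A True by (auto simp: vec_eq_iff)
  ultimately show ?thesis by blast
next
  case False
  define A' where "A' = mat n n (\<lambda>(i,j). if i < r then A $$ (i,j) else A $$ (0,j))"
  have A': "A' \<in> carrier_mat n n" unfolding A'_def by simp
  have "row A' 0 = row A' r"
    using rn False by (auto simp: A'_def row_def)
  hence "det A' = 0" using det_identical_rows[OF A', of 0 r] rn False by auto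
  then obtain v where v: "v \<in> carrier_vec n" "v \<noteq> 0\<^sub>v n" "A' *\<^sub>v v = 0\<^sub>v n"
    using det_0_iff_vec_prod_zero[OF A'] by auto
  have "A *\<^sub>v v = 0\<^sub>v r"
  proof (rule eq_vecI)
    fix i assume i: "i < dim_vec (0\<^sub>v r :: real vec)"
    hence "i < r" by simp
    have "(A' *\<^sub>v v) $ i = 0" using v(3) i rn by simp
    moreover have "(A' *\<^sub>v v) $ i = (A *\<^sub>v v) $ i"
      using \<open>i < r\<close> rn A v(1)
      by (auto simp: A'_def row_def scalar_prod_def)
    ultimately show "(A *\<^sub>v v) $ i = 0\<^sub>v r $ i" using \<open>i<r\<close> by simp
  qed (use A in simp)
  thus ?thesis using v by auto
qed



lemma complex_eigen_exists:
  fixes C :: "complex mat"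
  assumes C: "C \<in> carrier_mat r r" and r: "0 < r"
  shows "\<exists>a u. u \<in> carrier_vec r \<and> u \<noteq> 0\<^sub>v r \<and> C *\<^sub>v u = a \<cdot>\<^sub>v u"
proof -
  obtain as where cp: "char_poly C = (\<Prod>a\<leftarrow>as. [:- a, 1:])"
    using char_poly_factorized[OF C] by auto
  have "degree (char_poly C) = r" using degree_monic_char_poly[OF C] by auto
  hence "as \<noteq> []" using r cp by auto
  then obtain a as' where as: "as = a # as'" by (cases as) auto
  have "poly (char_poly C) a = 0" unfolding cp as by simp
  hence "eigenvalue C a" using eigenvalue_root_char_poly[OF C] by simp
  then obtain u where "eigenvector C u a" unfolding eigenvalue_def by auto
  thus ?thesis unfolding eigenvector_def using C by auto
qed

lemma real_sym_eigen_exists: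
  fixes C :: "real mat"
  assumes C: "C \<in> carrier_mat r r" and sym: "C\<^sup>T = C" and r: "0 < r"
  shows "\<exists>mu y. y \<in> carrier_vec r \<and> y \<noteq> 0\<^sub>v r \<and> C *\<^sub>v y = mu \<cdot>\<^sub>v y"
proof -
  let ?Cc = "map_mat complex_of_real C"
  have Cc: "?Cc \<in> carrier_mat r r" using C by simp
  obtain a u where u: "u \<in> carrier_vec r" "u \<noteq> 0\<^sub>v r" "?Cc *\<^sub>v u = a \<cdot>\<^sub>v u"
    using complex_eigen_exists[OF Cc r] by auto
  have symi: "C $$ (i,j) = C $$ (j,i)" if "i < r" "j < r" for i j
    using sym that C by (metis carrier_matD(1) carrier_matD(2) index_transpose_mat(1))
  have eq: "(\<Sum>j<r. of_real (C$$(i,j)) * u$j) = a * u$i" if i: "i < r" for i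
  proof -
    have "(?Cc *\<^sub>v u) $ i = (a \<cdot>\<^sub>v u) $ i" using u(3) by simp
    thus ?thesis using i C u(1) by (auto simp: scalar_prod_def row_def lessThan_atLeast0 mult.commute)
  qed
  define s where "s = (\<Sum>i<r. cnj (u$i) * (\<Sum>j<r. of_real (C$$(i,j)) * u$j))"
  define N where "N = (\<Sum>i<r. cnj (u$i) * u$i)"
  have "s = (\<Sum>i<r. cnj (u$i) * (a * u$i))" unfolding s_def
    by (rule sum.cong) (simp_all add: eq)
  hence s1: "s = a * N" unfolding N_def
    by (simp add: sum_distrib_left mult.commute mult.left_commute)
  have "cnj s = (\<Sum>i<r. \<Sum>j<r. u$i * of_real (C$$(i,j)) * cnj (u$j))"
    unfolding s_def by (simp add: sum_distrib_left mult.commute mult.left_commute)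
  also have "\<dots> = (\<Sum>j<r. \<Sum>i<r. u$i * of_real (C$$(i,j)) * cnj (u$j))"
    by (rule sum.swap)
  also have "\<dots> = s" unfolding s_def sum_distrib_left
    by (intro sum.cong refl, simp add: symi mult.commute mult.left_commute)
  finally have s2: "cnj s = s" .
  have Nreal: "cnj N = N" unfolding N_def by (simp add: mult.commute)
  have "N \<noteq> 0"
  proof
    assume N0: "N = 0"
    have "N = (\<Sum>i<r. of_real ((cmod (u$i))^2))" unfolding N_def
      by (intro sum.cong refl) (metis complex_norm_square mult.commute)
    hence "N = of_real (\<Sum>i<r. (cmod (u$i))^2)" by simp
    hence "(\<Sum>i<r. (cmod (u$i))^2) = 0" using N0 by (metis of_real_eq_0_iff)
    hence "\<forall>i\<in>{..<r}. (cmod (u$i))^2 = 0" by (subst sum_nonneg_eq_0_iff[symmetric]) auto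
    hence "u = 0\<^sub>v r" using u(1) by (auto simp: vec_eq_iff)
    thus False using u(2) by simp
  qed
  have "cnj a * N = a * N" using s1 s2 Nreal by (metis complex_cnj_mult)
  hence acnj: "cnj a = a" using \<open>N \<noteq> 0\<close> by simp
  hence ima: "Im a = 0" by (metis complex_cnj_cancel_iff complex.expand complex_cnj_complex_of_real Re_complex_of_real Im_complex_of_real complex_is_Real_iff Reals_cnj_iff)
  define x where "x = vec r (\<lambda>i. Re (u$i))"
  define y where "y = vec r (\<lambda>i. Im (u$i))"
  have ex: "C *\<^sub>v x = Re a \<cdot>\<^sub>v x"
  proof (rule eq_vecI)
    fix i assume "i < dim_vec (Re a \<cdot>\<^sub>v x)" hence i: "i < r" by (simp add: x_def)
    have "Re (\<Sum>j<r. of_real (C$$(i,j)) * u$j) = Re (a * u$i)" using eq[OF i] by simp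
    thus "(C *\<^sub>v x) $ i = (Re a \<cdot>\<^sub>v x) $ i" using i C ima
      by (simp add: x_def scalar_prod_def row_def lessThan_atLeast0 Re_sum)
  qed (use C in \<open>simp add: x_def\<close>)
  have ey: "C *\<^sub>v y = Re a \<cdot>\<^sub>v y"
  proof (rule eq_vecI)
    fix i assume "i < dim_vec (Re a \<cdot>\<^sub>v y)" hence i: "i < r" by (simp add: y_def)
    have "Im (\<Sum>j<r. of_real (C$$(i,j)) * u$j) = Im (a * u$i)" using eq[OF i] by simp
    thus "(C *\<^sub>v y) $ i = (Re a \<cdot>\<^sub>v y) $ i" using i C ima
      by (simp add: y_def scalar_prod_def row_def lessThan_atLeast0 Im_sum)
  qed (use C in \<open>simp add: y_def\<close>)
  have "x \<noteq> 0\<^sub>v r \<or> y \<noteq> 0\<^sub>v r"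
  proof (rule ccontr)
    assume "\<not> ?thesis"
    hence "\<forall>i<r. Re (u$i) = 0 \<and> Im (u$i) = 0"
      by (auto simp: x_def y_def vec_eq_iff)
    hence "u = 0\<^sub>v r" using u(1) by (auto simp: vec_eq_iff complex_eq_iff)
    thus False using u(2) by simp
  qed
  moreover have "x \<in> carrier_vec r" "y \<in> carrier_vec r" by (auto simp: x_def y_def)
  ultimately show ?thesis using ex ey by blast
qed

lemma mat_vec_zero: "(A :: real mat) \<in> carrier_mat nr nc \<Longrightarrow> A *\<^sub>v 0\<^sub>v nc = 0\<^sub>v nr"
  by (intro eq_vecI) (auto simp: scalar_prod_def)

lemma vec_minus_self: "(v :: real vec) \<in> carrier_vec n \<Longrightarrow> v - v = 0\<^sub>v n"
  by (intro eq_vecI) auto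

lemma trc: "A \<in> carrier_mat nr nc \<Longrightarrow> A\<^sup>T \<in> carrier_mat nc nr" by simp

definition onl :: "nat \<Rightarrow> real vec list \<Rightarrow> bool" where
  "onl n us \<longleftrightarrow> set us \<subseteq> carrier_vec n \<and> distinct us \<and>
     (\<forall>u\<in>set us. \<forall>w\<in>set us. u \<bullet> w = (if u = w then 1 else 0))"

lemma mat_of_cols_T_mult_index:
  assumes "set us \<subseteq> carrier_vec n" "set ws \<subseteq> carrier_vec n" "i < length us" "j < length ws"
  shows "((mat_of_cols n us)\<^sup>T * mat_of_cols n ws) $$ (i,j) = us!i \<bullet> ws!j"
proof -
  have "((mat_of_cols n us)\<^sup>T * mat_of_cols n ws) $$ (i,j) = row ((mat_of_cols n us)\<^sup>T) i \<bullet> col (mat_of_cols n ws) j"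
    using assms by (intro index_mult_mat(1)) auto
  also have "row ((mat_of_cols n us)\<^sup>T) i = col (mat_of_cols n us) i"
    using assms by (intro row_transpose) auto
  also have "col (mat_of_cols n us) i = us ! i" using assms by (simp add: col_mat_of_cols subsetD)
  also have "col (mat_of_cols n ws) j = ws ! j" using assms by (simp add: col_mat_of_cols subsetD)
  finally show ?thesis .
qed

lemma onl_mat:
  assumes "onl n us"
  shows "(mat_of_cols n us)\<^sup>T * mat_of_cols n us = 1\<^sub>m (length us)"
proof (rule eq_matI)
  fix i j assume ij: "i < dim_row (1\<^sub>m (length us) :: real mat)" "j < dim_col (1\<^sub>m (length us) :: real mat)"
  have s: "set us \<subseteq> carrier_vec n" using assms onl_def by auto
  have d: "distinct us" using assms onl_def by auto
  have "us!i \<bullet> us!j = (if us!i = us!j then 1 else 0)" using assms ij unfolding onl_def by auto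
  also have "(us!i = us!j) = (i = j)" using d ij by (simp add: nth_eq_iff_index_eq)
  finally show "((mat_of_cols n us)\<^sup>T * mat_of_cols n us) $$ (i,j) = 1\<^sub>m (length us) $$ (i,j)"
    using ij mat_of_cols_T_mult_index[OF s s, of i j] by simp
qed auto

lemma mat_onl:
  assumes X: "X \<in> carrier_mat n p" and XX: "X\<^sup>T * X = 1\<^sub>m p"
  shows "onl n (cols X)" "length (cols X) = p"
proof -
  have e: "col X i \<bullet> col X j = (if i = j then 1 else 0)" if "i < p" "j < p" for i j
  proof -
    have "(X\<^sup>T * X) $$ (i,j) = col X i \<bullet> col X j" using X that by simp
    thus ?thesis using XX that by simp
  qed
  have d: "distinct (cols X)"
  proof (subst distinct_conv_nth, intro allI impI)
    fix i j assume "i < length (cols X)" "j < length (cols X)" "i \<noteq> j"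
    hence ij: "i < p" "j < p" "i \<noteq> j" using X by auto
    show "cols X ! i \<noteq> cols X ! j"
    proof
      assume "cols X ! i = cols X ! j"
      hence "col X i = col X j" using ij X by simp
      hence "col X i \<bullet> col X j = col X i \<bullet> col X i" by simp
      thus False using e[of i j] e[of i i] ij by simp
    qed
  qed
  show "length (cols X) = p" using X by simp
  show "onl n (cols X)" unfolding onl_def
  proof (intro conjI ballI d)
    show "set (cols X) \<subseteq> carrier_vec n" using X by (auto simp: cols_def)
    fix u w assume "u \<in> set (cols X)" "w \<in> set (cols X)"
    then obtain i j where "i < p" "j < p" "u = col X i" "w = col X j" using X
      by (auto simp: cols_def)
    moreover have "(col X i = col X j) = (i = j)" if "i < p" "j < p" for i j
    proof
      assume eq: "col X i = col X j"
      have "col X i \<bullet> col X j = 1" using e[of i i] that eq by simp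
      thus "i = j" using e[of i j] that by (cases "i = j") auto
    qed simp
    ultimately show "u \<bullet> w = (if u = w then 1 else 0)" using e by auto
  qed
qed

lemma onl_carrier: "onl n us \<Longrightarrow> set us \<subseteq> carrier_vec n" by (simp add: onl_def)
lemma onl_distinct: "onl n us \<Longrightarrow> distinct us" by (simp add: onl_def)
lemma onl_unit: "onl n us \<Longrightarrow> u \<in> set us \<Longrightarrow> u \<bullet> u = 1" by (simp add: onl_def)
lemma onl_orth: "onl n us \<Longrightarrow> u \<in> set us \<Longrightarrow> w \<in> set us \<Longrightarrow> u \<noteq> w \<Longrightarrow> u \<bullet> w = 0"
  by (simp add: onl_def)

lemma onl_sub: "onl n us \<Longrightarrow> set ws \<subseteq> set us \<Longrightarrow> distinct ws \<Longrightarrow> onl n ws"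
  unfolding onl_def by blast

lemma onl_append:
  assumes "onl n xs" "onl n ys" "\<forall>x\<in>set xs. \<forall>y\<in>set ys. x \<bullet> y = 0"
  shows "onl n (xs @ ys)"
proof -
  have cx: "set xs \<subseteq> carrier_vec n" "set ys \<subseteq> carrier_vec n" using assms onl_def by auto
  have disj: "set xs \<inter> set ys = {}"
  proof (rule ccontr)
    assume "set xs \<inter> set ys \<noteq> {}"
    then obtain x where "x \<in> set xs" "x \<in> set ys" by auto
    thus False using assms(3) onl_unit[OF assms(1)] by fastforce
  qed
  show ?thesis unfolding onl_def
  proof (intro conjI ballI)
    show "set (xs @ ys) \<subseteq> carrier_vec n" using cx by auto
    show "distinct (xs @ ys)" using disj onl_distinct[OF assms(1)] onl_distinct[OF assms(2)] by auto
    fix u w assume u: "u \<in> set (xs @ ys)" and w: "w \<in> set (xs @ ys)"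
    show "u \<bullet> w = (if u = w then 1 else 0)"
    proof (cases "u \<in> set xs")
      case True
      show ?thesis
      proof (cases "w \<in> set xs")
        case True thus ?thesis using \<open>u \<in> set xs\<close> assms(1) onl_def by auto
      next
        case False hence "w \<in> set ys" using w by auto
        thus ?thesis using \<open>u \<in> set xs\<close> assms(3) disj by auto
      qed
    next
      case False hence uy: "u \<in> set ys" using u by auto
      show ?thesis
      proof (cases "w \<in> set ys")
        case True thus ?thesis using uy assms(2) onl_def by auto
      next
        case False hence "w \<in> set xs" using w by auto
        moreover have "u \<bullet> w = w \<bullet> u" using uy \<open>w \<in> set xs\<close> cx comm_scalar_prod by blast
        ultimately show ?thesis using uy assms(3) disj by auto
      qed
    qed
  qed
qed

lemma orth_list_iff:
  assumes "set us \<subseteq> carrier_vec n" "y \<in> carrier_vec n"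
  shows "((mat_of_cols n us)\<^sup>T *\<^sub>v y = 0\<^sub>v (length us)) = (\<forall>u\<in>set us. u \<bullet> y = 0)"
proof -
  have "((mat_of_cols n us)\<^sup>T *\<^sub>v y) $ i = us!i \<bullet> y" if "i < length us" for i
  proof -
    have "((mat_of_cols n us)\<^sup>T *\<^sub>v y) $ i = row ((mat_of_cols n us)\<^sup>T) i \<bullet> y"
      using that by simp
    also have "row ((mat_of_cols n us)\<^sup>T) i = col (mat_of_cols n us) i"
      using that by (intro row_transpose) auto
    also have "col (mat_of_cols n us) i = us ! i" using that assms by (simp add: col_mat_of_cols subsetD)
    finally show ?thesis .
  qed
  hence e: "\<forall>i<length us. ((mat_of_cols n us)\<^sup>T *\<^sub>v y) $ i = us!i \<bullet> y" by blast
  have "((mat_of_cols n us)\<^sup>T *\<^sub>v y = 0\<^sub>v (length us)) = (\<forall>i<length us. ((mat_of_cols n us)\<^sup>T *\<^sub>v y) $ i = 0)"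
    by (auto simp: vec_eq_iff)
  also have "\<dots> = (\<forall>i<length us. us!i \<bullet> y = 0)" using e by auto
  also have "\<dots> = (\<forall>u\<in>set us. u \<bullet> y = 0)" by (metis in_set_conv_nth)
  finally show ?thesis .
qed

lemma onl_length_le:
  assumes "onl n us" shows "length us \<le> n"
proof (rule ccontr)
  assume "\<not> ?thesis"
  hence lt: "n < length us" by simp
  let ?U = "mat_of_cols n us"
  have U: "?U \<in> carrier_mat n (length us)" by simp
  obtain x where x: "x \<in> carrier_vec (length us)" "x \<noteq> 0\<^sub>v (length us)" "?U *\<^sub>v x = 0\<^sub>v n"
    using kernel_nontriv[OF U lt] by auto
  have "x = (?U\<^sup>T * ?U) *\<^sub>v x" using onl_mat[OF assms] x by simp
  also have "\<dots> = ?U\<^sup>T *\<^sub>v (?U *\<^sub>v x)" using assoc_mult_mat_vec[OF transpose_carrier_mat[THEN iffD2, OF U] U x(1)] .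
  also have "\<dots> = 0\<^sub>v (length us)" using x mat_vec_zero[OF trc[OF U]] by simp
  finally show False using x by simp
qed

lemma normalize_vec:
  assumes x: "x \<in> carrier_vec n" "x \<noteq> 0\<^sub>v n"
  defines "z \<equiv> (1 / sqrt (x \<bullet> x)) \<cdot>\<^sub>v x"
  shows "z \<in> carrier_vec n" "z \<bullet> z = 1" "\<And>u. u \<in> carrier_vec n \<Longrightarrow> u \<bullet> x = 0 \<Longrightarrow> u \<bullet> z = 0"
proof -
  have pos: "x \<bullet> x > 0" using sq_ge0[of x] sq_eq0[OF x(1)] x(2) by linarith
  show "z \<in> carrier_vec n" using x unfolding z_def by simp
  have "z \<bullet> z = (1 / sqrt (x \<bullet> x)) * ((1 / sqrt (x \<bullet> x)) * (x \<bullet> x))"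
    unfolding z_def using x by (simp add: scalar_prod_smult_left scalar_prod_smult_right)
  also have "\<dots> = 1" using pos by (simp add: field_simps)
  finally show "z \<bullet> z = 1" .
  fix u assume "u \<in> carrier_vec n" "u \<bullet> x = 0"
  thus "u \<bullet> z = 0" unfolding z_def using x by (simp add: scalar_prod_smult_right)
qed

lemma onl_extend:
  assumes "onl n us"
  shows "\<exists>zs. onl n (us @ zs) \<and> length (us @ zs) = n"
  using assms
proof (induction "n - length us" arbitrary: us rule: less_induct)
  case less
  show ?case
  proof (cases "length us = n")
    case True thus ?thesis using less.prems by (intro exI[of _ "[]"]) auto
  next
    case False
    hence lt: "length us < n" using onl_length_le[OF less.prems] by simp
    let ?U = "mat_of_cols n us"
    have UT: "?U\<^sup>T \<in> carrier_mat (length us) n" by simp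
    obtain x where x: "x \<in> carrier_vec n" "x \<noteq> 0\<^sub>v n" "?U\<^sup>T *\<^sub>v x = 0\<^sub>v (length us)"
      using kernel_nontriv[OF UT lt] by auto
    have c: "set us \<subseteq> carrier_vec n" using less.prems onl_def by auto
    have ox: "\<forall>u\<in>set us. u \<bullet> x = 0" using orth_list_iff[OF c x(1)] x(3) by simp
    define z where "z = (1 / sqrt (x \<bullet> x)) \<cdot>\<^sub>v x"
    have z: "z \<in> carrier_vec n" "z \<bullet> z = 1" "\<forall>u\<in>set us. u \<bullet> z = 0"
      using normalize_vec[OF x(1) x(2)] ox c unfolding z_def[symmetric] by auto
    have onz: "onl n [z]" using z unfolding onl_def by auto
    have on2: "onl n (us @ [z])" by (rule onl_append[OF less.prems onz]) (use z in auto)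
    have "n - length (us @ [z]) < n - length us" using lt by simp
    from less.hyps[OF this on2] obtain zs where "onl n ((us @ [z]) @ zs)" "length ((us @ [z]) @ zs) = n"
      by auto
    thus ?thesis by (intro exI[of _ "z # zs"]) auto
  qed
qed

lemma square_orth_inv:
  fixes U :: "real mat"
  assumes U: "U \<in> carrier_mat n n" and UU: "U\<^sup>T * U = 1\<^sub>m n"
  shows "U * U\<^sup>T = 1\<^sub>m n"
  using mat_mult_left_right_inverse[of "U\<^sup>T" n U] U UU by simp

lemma complete_zero:
  assumes "onl n vs" "length vs = n" "x \<in> carrier_vec n" "\<forall>v\<in>set vs. v \<bullet> x = 0"
  shows "x = 0\<^sub>v n"
proof -
  let ?V = "mat_of_cols n vs"
  have V: "?V \<in> carrier_mat n n" using mat_of_cols_carrier(1)[of n vs] assms(2) by simp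
  have VV: "?V * ?V\<^sup>T = 1\<^sub>m n" using square_orth_inv[OF V] onl_mat[OF assms(1)] assms(2) by simp
  have z: "?V\<^sup>T *\<^sub>v x = 0\<^sub>v n" using orth_list_iff[OF onl_carrier[OF assms(1)] assms(3)] assms by simp
  have "x = (?V * ?V\<^sup>T) *\<^sub>v x" using VV assms by simp
  also have "\<dots> = ?V *\<^sub>v (?V\<^sup>T *\<^sub>v x)" using V assms by (simp add: assoc_mult_mat_vec)
  also have "\<dots> = ?V *\<^sub>v 0\<^sub>v n" using z by simp
  also have "\<dots> = 0\<^sub>v n" using V by (auto simp: vec_eq_iff scalar_prod_def)
  finally show ?thesis .
qed

lemma decomp_compl:
  assumes on: "onl n (ys @ zs)" and len: "length (ys @ zs) = n" and x: "x \<in> carrier_vec n"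
    and o: "\<forall>y\<in>set ys. y \<bullet> x = 0"
  shows "x = mat_of_cols n zs *\<^sub>v ((mat_of_cols n zs)\<^sup>T *\<^sub>v x)"
proof -
  let ?Z = "mat_of_cols n zs"
  have Z: "?Z \<in> carrier_mat n (length zs)" by simp
  have ZT: "?Z\<^sup>T \<in> carrier_mat (length zs) n" by simp
  have onz: "onl n zs" using onl_sub[OF on] onl_distinct[OF on] by auto
  have cy: "set ys \<subseteq> carrier_vec n" "set zs \<subseteq> carrier_vec n" using onl_carrier[OF on] by auto
  define c where "c = ?Z\<^sup>T *\<^sub>v x"
  have c: "c \<in> carrier_vec (length zs)" unfolding c_def by (rule mult_mat_vec_carrier[OF ZT x])
  define w where "w = ?Z *\<^sub>v c"
  have w: "w \<in> carrier_vec n" unfolding w_def by (rule mult_mat_vec_carrier[OF Z c])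
  define d where "d = x - w"
  have d: "d \<in> carrier_vec n" using x w unfolding d_def by simp
  have "?Z\<^sup>T *\<^sub>v d = ?Z\<^sup>T *\<^sub>v x - ?Z\<^sup>T *\<^sub>v w"
    unfolding d_def by (rule mult_minus_distrib_mat_vec[OF ZT x w])
  also have "?Z\<^sup>T *\<^sub>v w = (?Z\<^sup>T * ?Z) *\<^sub>v c"
    unfolding w_def by (rule assoc_mult_mat_vec[symmetric, OF ZT Z c])
  also have "\<dots> = c" using onl_mat[OF onz] c by simp
  also have "?Z\<^sup>T *\<^sub>v x - c = 0\<^sub>v (length zs)" unfolding c_def using vec_minus_self[OF mult_mat_vec_carrier[OF ZT x]] .
  finally have dz: "\<forall>z\<in>set zs. z \<bullet> d = 0" using orth_list_iff[OF cy(2) d] by simp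
  have dy: "\<forall>y\<in>set ys. y \<bullet> d = 0"
  proof
    fix y assume y: "y \<in> set ys"
    have yc: "y \<in> carrier_vec n" using y cy by auto
    have "\<forall>z\<in>set zs. z \<bullet> y = 0"
    proof
      fix z assume z: "z \<in> set zs"
      have "z \<noteq> y" using y z onl_distinct[OF on] by auto
      thus "z \<bullet> y = 0" using onl_orth[OF on, of z y] y z by auto
    qed
    hence Zy: "?Z\<^sup>T *\<^sub>v y = 0\<^sub>v (length zs)" using orth_list_iff[OF cy(2) yc] by simp
    have "y \<bullet> w = (?Z\<^sup>T *\<^sub>v y) \<bullet> c"
      unfolding w_def using transpose_vec_mult_scalar[OF Z c yc] by simp
    also have "\<dots> = 0" using Zy c by simp
    finally have yw: "y \<bullet> w = 0" .
    have "y \<bullet> d = y \<bullet> x - y \<bullet> w" unfolding d_def by (rule scalar_prod_minus_distrib[OF yc x w])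
    thus "y \<bullet> d = 0" using yw o y by simp
  qed
  have d0: "d = 0\<^sub>v n" using complete_zero[OF on len d] dy dz by auto
  show ?thesis
  proof (rule eq_vecI)
    fix i assume "i < dim_vec (?Z *\<^sub>v (?Z\<^sup>T *\<^sub>v x))"
    hence i: "i < n" by simp
    have "d $ i = 0" using d0 i by simp
    hence "x $ i - w $ i = 0" unfolding d_def using i w by simp
    thus "x $ i = (?Z *\<^sub>v (?Z\<^sup>T *\<^sub>v x)) $ i" unfolding w_def c_def by simp
  qed (use x in simp)
qed

lemma vec_minus_eq0:
  fixes x y :: "real vec"
  assumes "x \<in> carrier_vec n" "y \<in> carrier_vec n" "x - y = 0\<^sub>v n"
  shows "x = y"
proof (rule eq_vecI)
  fix i assume "i < dim_vec y"
  hence i: "i < n" using assms by simp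
  have "(x - y) $ i = 0" using assms(3) i by simp
  moreover have "(x - y) $ i = x $ i - y $ i" using i assms by (intro index_minus_vec(1)) simp
  ultimately show "x $ i = y $ i" by simp
qed (use assms in simp)

definition Sp :: "nat \<Rightarrow> real vec list \<Rightarrow> real vec set" where
  "Sp n us = {mat_of_cols n us *\<^sub>v c | c. c \<in> carrier_vec (length us)}"

definition CS :: "real mat \<Rightarrow> real vec set" where
  "CS F = {F *\<^sub>v c | c. c \<in> carrier_vec (dim_col F)}"

lemma Sp_CS: "Sp n us = CS (mat_of_cols n us)"
  unfolding Sp_def CS_def by simp

lemma CS_carrier: "F \<in> carrier_mat n q \<Longrightarrow> CS F \<subseteq> carrier_vec n"
  unfolding CS_def by auto

lemma CS_mem: "F \<in> carrier_mat n q \<Longrightarrow> c \<in> carrier_vec q \<Longrightarrow> F *\<^sub>v c \<in> CS F"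
  unfolding CS_def by auto

lemma cols_in_CS:
  assumes F: "F \<in> carrier_mat n q" and sub: "set us \<subseteq> CS F"
  shows "\<exists>C \<in> carrier_mat q (length us). mat_of_cols n us = F * C"
proof -
  have "\<forall>u\<in>set us. \<exists>c. c \<in> carrier_vec q \<and> u = F *\<^sub>v c" using sub F unfolding CS_def by auto
  then obtain f where f: "\<forall>u\<in>set us. f u \<in> carrier_vec q \<and> u = F *\<^sub>v f u" by metis
  define C where "C = mat_of_cols q (map f us)"
  have C: "C \<in> carrier_mat q (length us)" unfolding C_def using mat_of_cols_carrier(1)[of q "map f us"] by simp
  have "mat_of_cols n us = F * C"
  proof (rule mat_col_eqI)
    fix j assume "j < dim_col (F * C)"
    hence j: "j < length us" using C by simp
    have uj: "us ! j \<in> set us" using j by simp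
    have uc: "us ! j \<in> carrier_vec n" using f uj F by (metis mult_mat_vec_carrier)
    have "col (F * C) j = F *\<^sub>v col C j" using F C j by (intro col_mult2) auto
    also have "col C j = f (us ! j)" unfolding C_def using j f uj by (subst col_mat_of_cols) auto
    also have "F *\<^sub>v f (us ! j) = us ! j" using f uj by simp
    also have "us ! j = col (mat_of_cols n us) j" using j uc
      by (subst col_mat_of_cols) auto
    finally show "col (mat_of_cols n us) j = col (F * C) j" by simp
  qed (use F C in auto)
  thus ?thesis using C by blast
qed

lemma CS_mono:
  assumes F: "F \<in> carrier_mat n q" and G: "G \<in> carrier_mat n p" and sub: "set (cols G) \<subseteq> CS F"
  shows "CS G \<subseteq> CS F"
proof
  fix x assume "x \<in> CS G"
  then obtain c where c: "c \<in> carrier_vec p" "x = G *\<^sub>v c" using G unfolding CS_def by auto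
  obtain C where C: "C \<in> carrier_mat q (length (cols G))" "mat_of_cols n (cols G) = F * C"
    using cols_in_CS[OF F sub] by blast
  have GFC: "G = F * C" using C(2) G mat_of_cols_cols[of G] by simp
  have C1: "C \<in> carrier_mat q p" using C(1) G by simp
  have "x = (F * C) *\<^sub>v c" unfolding GFC[symmetric] using c(2) .
  also have "\<dots> = F *\<^sub>v (C *\<^sub>v c)" by (rule assoc_mult_mat_vec[OF F C1 c(1)])
  finally have "x = F *\<^sub>v (C *\<^sub>v c)" .
  moreover have "C *\<^sub>v c \<in> carrier_vec q" using C1 c by simp
  ultimately show "x \<in> CS F" using F by (simp add: CS_mem)
qed

lemma onl_grow:
  assumes F: "F \<in> carrier_mat n q" and on: "onl n us" and sub: "set us \<subseteq> CS F"
  shows "\<exists>zs. onl n (us @ zs) \<and> set (us @ zs) \<subseteq> CS F \<and> CS F \<subseteq> Sp n (us @ zs)"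
  using on sub
proof (induction "n - length us" arbitrary: us rule: less_induct)
  case less
  show ?case
  proof (cases "CS F \<subseteq> Sp n us")
    case True thus ?thesis using less.prems by (intro exI[of _ "[]"]) auto
  next
    case False
    then obtain x where xS: "x \<in> CS F" and xn: "x \<notin> Sp n us" by auto
    then obtain c where c: "c \<in> carrier_vec q" "x = F *\<^sub>v c" using F unfolding CS_def by auto
    have x: "x \<in> carrier_vec n" using c F by simp
    let ?U = "mat_of_cols n us"
    have U: "?U \<in> carrier_mat n (length us)" by simp
    have UT: "?U\<^sup>T \<in> carrier_mat (length us) n" by simp
    have cu: "set us \<subseteq> carrier_vec n" using onl_carrier[OF less.prems(1)] .
    define a where "a = ?U\<^sup>T *\<^sub>v x"
    have a: "a \<in> carrier_vec (length us)" unfolding a_def by (rule mult_mat_vec_carrier[OF UT x])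
    define w where "w = x - ?U *\<^sub>v a"
    have Ua: "?U *\<^sub>v a \<in> carrier_vec n" by (rule mult_mat_vec_carrier[OF U a])
    have w: "w \<in> carrier_vec n" unfolding w_def using x Ua by simp
    have w0: "w \<noteq> 0\<^sub>v n"
    proof
      assume "w = 0\<^sub>v n"
      hence "x = ?U *\<^sub>v a" using vec_minus_eq0[OF x Ua] unfolding w_def by simp
      hence "x \<in> Sp n us" unfolding Sp_def using a by auto
      thus False using xn by simp
    qed
    have "?U\<^sup>T *\<^sub>v w = ?U\<^sup>T *\<^sub>v x - ?U\<^sup>T *\<^sub>v (?U *\<^sub>v a)"
      unfolding w_def by (rule mult_minus_distrib_mat_vec[OF UT x Ua])
    also have "?U\<^sup>T *\<^sub>v (?U *\<^sub>v a) = (?U\<^sup>T * ?U) *\<^sub>v a"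
      by (rule assoc_mult_mat_vec[symmetric, OF UT U a])
    also have "\<dots> = a" using onl_mat[OF less.prems(1)] a by simp
    also have "?U\<^sup>T *\<^sub>v x - a = 0\<^sub>v (length us)" unfolding a_def
      using vec_minus_self[OF mult_mat_vec_carrier[OF UT x]] .
    finally have ow: "\<forall>u\<in>set us. u \<bullet> w = 0" using orth_list_iff[OF cu w] by simp
    obtain C0 where C0: "C0 \<in> carrier_mat q (length us)" "?U = F * C0"
      using cols_in_CS[OF F less.prems(2)] by blast
    have C0a: "C0 *\<^sub>v a \<in> carrier_vec q" using C0 a by simp
    have "?U *\<^sub>v a = F *\<^sub>v (C0 *\<^sub>v a)" using C0 F a by (simp add: assoc_mult_mat_vec)
    hence wF: "w = F *\<^sub>v (c - C0 *\<^sub>v a)" unfolding w_def using c C0a F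
      by (simp add: mult_minus_distrib_mat_vec)
    define z where "z = (1 / sqrt (w \<bullet> w)) \<cdot>\<^sub>v w"
    have z: "z \<in> carrier_vec n" "z \<bullet> z = 1" "\<forall>u\<in>set us. u \<bullet> z = 0"
      using normalize_vec[OF w w0] ow cu unfolding z_def[symmetric] by auto
    have zS: "z \<in> CS F"
    proof -
      have "z = F *\<^sub>v ((1 / sqrt (w \<bullet> w)) \<cdot>\<^sub>v (c - C0 *\<^sub>v a))"
        unfolding z_def wF using F c C0a by (simp add: mult_mat_vec)
      moreover have "(1 / sqrt (w \<bullet> w)) \<cdot>\<^sub>v (c - C0 *\<^sub>v a) \<in> carrier_vec q" using c C0a by simp
      ultimately show ?thesis using F CS_mem by metis
    qed
    have onz: "onl n [z]" using z unfolding onl_def by auto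
    have on2: "onl n (us @ [z])" by (rule onl_append[OF less.prems(1) onz]) (use z in auto)
    have lt: "length (us @ [z]) \<le> n" using onl_length_le[OF on2] .
    have "n - length (us @ [z]) < n - length us" using lt by simp
    from less.hyps[OF this on2] obtain zs where
      "onl n ((us @ [z]) @ zs)" "set ((us @ [z]) @ zs) \<subseteq> CS F" "CS F \<subseteq> Sp n ((us @ [z]) @ zs)"
      using less.prems(2) zS by auto
    thus ?thesis by (intro exI[of _ "z # zs"]) auto
  qed
qed

lemma smult_eigen:
  fixes G :: "real mat"
  assumes G: "G \<in> carrier_mat n n" and y: "y \<in> carrier_vec n" and e: "G *\<^sub>v y = mu \<cdot>\<^sub>v y"
  shows "G *\<^sub>v (k \<cdot>\<^sub>v y) = mu \<cdot>\<^sub>v (k \<cdot>\<^sub>v y)"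
  using mult_mat_vec[OF G y, of k] e by (simp add: smult_smult_assoc mult.commute)

lemma spec_ind:
  fixes C :: "real mat"
  assumes C: "C \<in> carrier_mat r r" and sym: "C\<^sup>T = C"
  shows "W \<in> carrier_mat r p \<Longrightarrow> W\<^sup>T * W = 1\<^sub>m p \<Longrightarrow> G \<in> carrier_mat p p \<Longrightarrow> C * W = W * G \<Longrightarrow>
    \<exists>Q ds. Q \<in> carrier_mat p p \<and> Q\<^sup>T * Q = 1\<^sub>m p \<and> (\<forall>j<p. C *\<^sub>v col (W * Q) j = ds j \<cdot>\<^sub>v col (W * Q) j)"
proof (induction p arbitrary: W G)
  case 0
  show ?case by (intro exI[of _ "1\<^sub>m 0"] exI[of _ "\<lambda>_. 0"]) auto
next
  case (Suc p)
  note W = Suc.prems(1) and WW = Suc.prems(2) and G = Suc.prems(3) and CW = Suc.prems(4)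
  have WT: "W\<^sup>T \<in> carrier_mat (Suc p) r" using W by simp
  have Geq: "W\<^sup>T * C * W = G"
  proof -
    have "W\<^sup>T * C * W = W\<^sup>T * (C * W)" by (rule assoc_mult_mat[OF WT C W])
    also have "\<dots> = W\<^sup>T * (W * G)" using CW by simp
    also have "\<dots> = (W\<^sup>T * W) * G" by (rule assoc_mult_mat[symmetric, OF WT W G])
    also have "\<dots> = G" using WW G by simp
    finally show ?thesis .
  qed
  have Gsym: "G\<^sup>T = G"
  proof -
    have WTC: "W\<^sup>T * C \<in> carrier_mat (Suc p) r" using WT C by simp
    have "G\<^sup>T = W\<^sup>T * (W\<^sup>T * C)\<^sup>T" unfolding Geq[symmetric] by (rule transpose_mult[OF WTC W])
    also have "(W\<^sup>T * C)\<^sup>T = C\<^sup>T * W" using transpose_mult[OF WT C] by simp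
    also have "W\<^sup>T * (C\<^sup>T * W) = W\<^sup>T * C * W" using sym assoc_mult_mat[OF WT C W] by simp
    finally show ?thesis using Geq by simp
  qed
  obtain mu y where y: "y \<in> carrier_vec (Suc p)" "y \<noteq> 0\<^sub>v (Suc p)" "G *\<^sub>v y = mu \<cdot>\<^sub>v y"
    using real_sym_eigen_exists[OF G Gsym] by auto
  define y0 where "y0 = (1 / sqrt (y \<bullet> y)) \<cdot>\<^sub>v y"
  have y0: "y0 \<in> carrier_vec (Suc p)" "y0 \<bullet> y0 = 1"
    using normalize_vec[OF y(1) y(2)] unfolding y0_def[symmetric] by auto
  have Gy0: "G *\<^sub>v y0 = mu \<cdot>\<^sub>v y0" unfolding y0_def by (rule smult_eigen[OF G y(1) y(3)])
  have on1: "onl (Suc p) [y0]" using y0 unfolding onl_def by auto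
  obtain zs where zs: "onl (Suc p) ([y0] @ zs)" "length ([y0] @ zs) = Suc p"
    using onl_extend[OF on1] by blast
  have lzs: "length zs = p" using zs(2) by simp
  have onzs: "onl (Suc p) zs" using onl_sub[OF zs(1)] onl_distinct[OF zs(1)] by auto
  have czs: "set zs \<subseteq> carrier_vec (Suc p)" using onl_carrier[OF onzs] .
  define Z2 where "Z2 = mat_of_cols (Suc p) zs"
  have Z2: "Z2 \<in> carrier_mat (Suc p) p" unfolding Z2_def using lzs mat_of_cols_carrier(1)[of "Suc p" zs] by simp
  have Z2T: "Z2\<^sup>T \<in> carrier_mat p (Suc p)" using Z2 by simp
  have Z2Z2: "Z2\<^sup>T * Z2 = 1\<^sub>m p" unfolding Z2_def using onl_mat[OF onzs] lzs by simp
  have zy0: "\<forall>z\<in>set zs. z \<bullet> y0 = 0"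
  proof
    fix z assume z: "z \<in> set zs"
    have "z \<noteq> y0" using z onl_distinct[OF zs(1)] by auto
    thus "z \<bullet> y0 = 0" using onl_orth[OF zs(1), of z y0] z by auto
  qed
  have Z2y0: "Z2\<^sup>T *\<^sub>v y0 = 0\<^sub>v p" using orth_list_iff[OF czs y0(1)] zy0 lzs unfolding Z2_def by simp
  define G2 where "G2 = Z2\<^sup>T * (G * Z2)"
  have GZ2: "G * Z2 \<in> carrier_mat (Suc p) p" using G Z2 by simp
  have G2: "G2 \<in> carrier_mat p p" unfolding G2_def using Z2T GZ2 by simp
  have GZ2eq: "G * Z2 = Z2 * G2"
  proof (rule mat_col_eqI)
    fix j assume "j < dim_col (Z2 * G2)"
    hence j: "j < p" using Z2 G2 by simp
    have zj: "zs ! j \<in> set zs" using j lzs by simp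
    have zjc: "zs ! j \<in> carrier_vec (Suc p)" using zj czs by auto
    have colj: "col Z2 j = zs ! j" unfolding Z2_def using j lzs zjc by (simp add: col_mat_of_cols)
    define g where "g = G *\<^sub>v zs ! j"
    have g: "g \<in> carrier_vec (Suc p)" unfolding g_def using G zjc by simp
    have c1: "col (G * Z2) j = g" unfolding g_def using col_mult2[OF G Z2 j] colj by simp
    have "y0 \<bullet> g = (G\<^sup>T *\<^sub>v y0) \<bullet> zs ! j" unfolding g_def
      using transpose_vec_mult_scalar[OF G zjc y0(1)] by simp
    also have "\<dots> = mu * (y0 \<bullet> zs ! j)" using Gsym Gy0 y0(1) zjc by simp
    also have "y0 \<bullet> zs ! j = 0" using zy0 zj comm_scalar_prod[OF y0(1) zjc] by simp
    finally have y0g: "y0 \<bullet> g = 0" by simp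
    have gdec: "g = Z2 *\<^sub>v (Z2\<^sup>T *\<^sub>v g)" unfolding Z2_def
      by (rule decomp_compl[OF zs(1) zs(2) g]) (use y0g in simp)
    have "col (Z2 * G2) j = Z2 *\<^sub>v col G2 j" by (rule col_mult2[OF Z2 G2 j])
    also have "col G2 j = Z2\<^sup>T *\<^sub>v col (G * Z2) j" unfolding G2_def by (rule col_mult2[OF Z2T GZ2 j])
    finally show "col (G * Z2) j = col (Z2 * G2) j" using c1 gdec by simp
  qed (use Z2 G2 G in auto)
  define W' where "W' = W * Z2"
  have W': "W' \<in> carrier_mat r p" unfolding W'_def using W Z2 by simp
  have W'W': "W'\<^sup>T * W' = 1\<^sub>m p"
  proof -
    have "W'\<^sup>T = Z2\<^sup>T * W\<^sup>T" unfolding W'_def by (rule transpose_mult[OF W Z2])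
    hence "W'\<^sup>T * W' = Z2\<^sup>T * W\<^sup>T * (W * Z2)" unfolding W'_def by simp
    also have "\<dots> = Z2\<^sup>T * (W\<^sup>T * (W * Z2))" by (rule assoc_mult_mat[OF Z2T WT W'[unfolded W'_def]])
    also have "W\<^sup>T * (W * Z2) = (W\<^sup>T * W) * Z2" by (rule assoc_mult_mat[symmetric, OF WT W Z2])
    also have "\<dots> = Z2" using WW Z2 by simp
    finally show ?thesis using Z2Z2 by simp
  qed
  have CW': "C * W' = W' * G2"
  proof -
    have "C * W' = (C * W) * Z2" unfolding W'_def by (rule assoc_mult_mat[symmetric, OF C W Z2])
    also have "\<dots> = (W * G) * Z2" using CW by simp
    also have "\<dots> = W * (G * Z2)" by (rule assoc_mult_mat[OF W G Z2])
    also have "\<dots> = W * (Z2 * G2)" using GZ2eq by simp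
    also have "\<dots> = W' * G2" unfolding W'_def by (rule assoc_mult_mat[symmetric, OF W Z2 G2])
    finally show ?thesis .
  qed
  obtain Q' ds' where Q': "Q' \<in> carrier_mat p p" "Q'\<^sup>T * Q' = 1\<^sub>m p"
    "\<forall>j<p. C *\<^sub>v col (W' * Q') j = ds' j \<cdot>\<^sub>v col (W' * Q') j"
    using Suc.IH[OF W' W'W' G2 CW'] by blast
  define R where "R = Z2 * Q'"
  have R: "R \<in> carrier_mat (Suc p) p" unfolding R_def using Z2 Q' by simp
  have RR: "R\<^sup>T * R = 1\<^sub>m p"
  proof -
    have "R\<^sup>T = Q'\<^sup>T * Z2\<^sup>T" unfolding R_def by (rule transpose_mult[OF Z2 Q'(1)])
    hence "R\<^sup>T * R = Q'\<^sup>T * Z2\<^sup>T * (Z2 * Q')" unfolding R_def by simp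
    also have "\<dots> = Q'\<^sup>T * (Z2\<^sup>T * (Z2 * Q'))" by (rule assoc_mult_mat[OF trc[OF Q'(1)] Z2T R[unfolded R_def]])
    also have "Z2\<^sup>T * (Z2 * Q') = (Z2\<^sup>T * Z2) * Q'" by (rule assoc_mult_mat[symmetric, OF Z2T Z2 Q'(1)])
    also have "\<dots> = Q'" using Z2Z2 Q' by simp
    finally show ?thesis using Q' by simp
  qed
  have onR: "onl (Suc p) (cols R)" and lR: "length (cols R) = p" using mat_onl[OF R RR] by auto
  have cross: "\<forall>x\<in>set [y0]. \<forall>v\<in>set (cols R). x \<bullet> v = 0"
  proof (intro ballI)
    fix x v assume "x \<in> set [y0]" "v \<in> set (cols R)"
    then obtain j where j: "j < p" "v = col R j" "x = y0" using R by (auto simp: cols_def)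
    have cQ: "col Q' j \<in> carrier_vec p" using Q' j by simp
    have "v = Z2 *\<^sub>v col Q' j" unfolding j R_def by (rule col_mult2[OF Z2 Q'(1) j(1)])
    hence "x \<bullet> v = (Z2\<^sup>T *\<^sub>v y0) \<bullet> col Q' j" using j transpose_vec_mult_scalar[OF Z2 cQ y0(1)] by simp
    thus "x \<bullet> v = 0" using Z2y0 cQ by simp
  qed
  have onQ: "onl (Suc p) ([y0] @ cols R)" by (rule onl_append[OF on1 onR cross])
  define Q where "Q = mat_of_cols (Suc p) (y0 # cols R)"
  have Q: "Q \<in> carrier_mat (Suc p) (Suc p)" unfolding Q_def using lR mat_of_cols_carrier(1)[of "Suc p" "y0 # cols R"] by simp
  have QQ: "Q\<^sup>T * Q = 1\<^sub>m (Suc p)" unfolding Q_def using onl_mat[OF onQ] lR by simp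
  have cR: "set (cols R) \<subseteq> carrier_vec (Suc p)" using onl_carrier[OF onR] .
  have colQ0: "col Q 0 = y0" unfolding Q_def using y0 by (subst col_mat_of_cols) auto
  have colQS: "col Q (Suc j) = col R j" if j: "j < p" for j
  proof -
    have "col R j \<in> carrier_vec (Suc p)" using R j by simp
    thus ?thesis unfolding Q_def using j lR by (subst col_mat_of_cols) auto
  qed
  define ds where "ds = (\<lambda>j. if j = 0 then mu else ds' (j - 1))"
  have eig: "\<forall>j<Suc p. C *\<^sub>v col (W * Q) j = ds j \<cdot>\<^sub>v col (W * Q) j"
  proof (intro allI impI)
    fix j assume j: "j < Suc p"
    have cWQ: "col (W * Q) j = W *\<^sub>v col Q j" by (rule col_mult2[OF W Q j])
    show "C *\<^sub>v col (W * Q) j = ds j \<cdot>\<^sub>v col (W * Q) j"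
    proof (cases j)
      case 0
      have "C *\<^sub>v (W *\<^sub>v y0) = (C * W) *\<^sub>v y0" by (rule assoc_mult_mat_vec[symmetric, OF C W y0(1)])
      also have "\<dots> = (W * G) *\<^sub>v y0" using CW by simp
      also have "\<dots> = W *\<^sub>v (G *\<^sub>v y0)" by (rule assoc_mult_mat_vec[OF W G y0(1)])
      also have "\<dots> = mu \<cdot>\<^sub>v (W *\<^sub>v y0)" using Gy0 mult_mat_vec[OF W y0(1)] by simp
      finally show ?thesis using cWQ colQ0 0 by (simp add: ds_def)
    next
      case (Suc j')
      hence j': "j' < p" using j by simp
      have cQ: "col Q' j' \<in> carrier_vec p" using Q' j' by simp
      have "col (W * Q) j = W *\<^sub>v col R j'" using cWQ colQS[OF j'] Suc by simp
      also have "col R j' = Z2 *\<^sub>v col Q' j'" unfolding R_def by (rule col_mult2[OF Z2 Q'(1) j'])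
      also have "W *\<^sub>v (Z2 *\<^sub>v col Q' j') = W' *\<^sub>v col Q' j'" unfolding W'_def
        by (rule assoc_mult_mat_vec[symmetric, OF W Z2 cQ])
      also have "\<dots> = col (W' * Q') j'" by (rule col_mult2[symmetric, OF W' Q'(1) j'])
      finally have "col (W * Q) j = col (W' * Q') j'" .
      thus ?thesis using Q'(3) j' Suc by (simp add: ds_def)
    qed
  qed
  show ?case using Q QQ eig by blast
qed

lemma (in vec_space) dim_eq_card:
  assumes S: "S \<subseteq> carrier_vec n" and T: "T \<subseteq> carrier_vec n" and fin: "finite T"
    and li: "lin_indpt T" and sp: "span T = span S"
  shows "vectorspace.dim class_ring (span_vs S) = card T"
proof -
  have sub: "submodule class_ring (span S) V" using span_is_submodule S by simp
  have vs: "vectorspace class_ring (span_vs S)"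
    using field.field_axioms vectorspace_def submodule_is_module[OF sub] by metis
  have "T \<subseteq> span T" by (rule in_own_span) (use T in simp)
  hence TS: "T \<subseteq> span S" using sp by simp
  have li2: "LinearCombinations.module.lin_indpt class_ring (span_vs S) T"
    using span_li_not_depend(2)[OF TS sub] li by simp
  have sp2: "LinearCombinations.module.span class_ring (span_vs S) T = carrier (span_vs S)"
    using span_li_not_depend(1)[OF TS sub] sp by simp
  have "vectorspace.basis class_ring (span_vs S) T"
    using vectorspace.basis_def[OF vs] li2 sp2 TS by simp
  thus ?thesis using vectorspace.dim_basis[OF vs fin] by simp
qed

lemma onl_li:
  assumes on: "onl n us"
  shows "LinearCombinations.module.lin_indpt class_ring (module_vec TYPE(real) n) (set us)"
proof -
  interpret vec_space "TYPE(real)" n .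
  show ?thesis
proof (rule finite_lin_indpt2, goal_cases)
  case 1 show ?case by simp
next
  case 2 show ?case using onl_carrier[OF on] by auto
next
  case (3 a)
  note lc = 3(2)
  have "\<forall>u\<in>set us. a u = 0"
  proof
    fix u assume u: "u \<in> set us"
    have uc: "u \<in> carrier_vec n" using u onl_carrier[OF on] by auto
    have f: "(\<lambda>v. a v \<cdot>\<^sub>v v) \<in> set us \<rightarrow> carrier_vec n" using onl_carrier[OF on] by auto
    have "lincomb a (set us) \<bullet> u = (\<Sum>v\<in>set us. (a v \<cdot>\<^sub>v v) \<bullet> u)"
      unfolding lincomb_def by (rule finsum_scalar_prod_sum[OF f uc])
    also have "\<dots> = (\<Sum>v\<in>set us. a v * (v \<bullet> u))"
      by (intro sum.cong refl) (use onl_carrier[OF on] uc in \<open>auto intro!: smult_scalar_prod_distrib\<close>)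
    also have "\<dots> = (\<Sum>v\<in>set us. if v = u then a v else 0)"
      by (intro sum.cong refl) (use onl_unit[OF on] onl_orth[OF on] u in auto)
    also have "\<dots> = a u" using u by simp
    finally have "a u = lincomb a (set us) \<bullet> u" by simp
    also have "\<dots> = 0" using lc uc by simp
    finally show "a u = 0" by simp
  qed
  thus ?case by (simp add: class_ring_simps)
qed
qed

lemma mat_unit_col:
  fixes A :: "real mat"
  assumes A: "A \<in> carrier_mat n p" and j: "j < p"
  shows "A *\<^sub>v unit_vec p j = col A j"
proof (rule eq_vecI)
  fix i assume "i < dim_vec (col A j)"
  hence i: "i < n" using A by simp
  have "(A *\<^sub>v unit_vec p j) $ i = row A i \<bullet> unit_vec p j" using A i by simp
  also have "\<dots> = row A i $ j" using j by (rule scalar_prod_right_unit)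
  finally show "(A *\<^sub>v unit_vec p j) $ i = col A j $ i" using A i j by simp
qed (use A in simp)

lemma set_Sp:
  assumes "set ws \<subseteq> carrier_vec n"
  shows "set ws \<subseteq> Sp n ws"
proof
  fix w assume "w \<in> set ws"
  then obtain j where j: "j < length ws" "w = ws ! j" by (auto simp: in_set_conv_nth)
  have "mat_of_cols n ws *\<^sub>v unit_vec (length ws) j = col (mat_of_cols n ws) j"
    by (rule mat_unit_col[OF mat_of_cols_carrier(1) j(1)])
  also have "\<dots> = w" using j assms by (subst col_mat_of_cols) auto
  finally have "w = mat_of_cols n ws *\<^sub>v unit_vec (length ws) j" by simp
  thus "w \<in> Sp n ws" unfolding Sp_def by (intro CollectI exI[of _ "unit_vec (length ws) j"]) simp
qed

lemma Sp_orth: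
  assumes on: "onl n (xs @ ys)" and a: "a \<in> Sp n xs" and b: "b \<in> Sp n ys"
  shows "a \<bullet> b = 0"
proof -
  let ?X = "mat_of_cols n xs" and ?Y = "mat_of_cols n ys"
  obtain c where c: "c \<in> carrier_vec (length xs)" "a = ?X *\<^sub>v c" using a unfolding Sp_def by auto
  obtain d where d: "d \<in> carrier_vec (length ys)" "b = ?Y *\<^sub>v d" using b unfolding Sp_def by auto
  have X: "?X \<in> carrier_mat n (length xs)" by simp
  have Y: "?Y \<in> carrier_mat n (length ys)" by simp
  have cx: "set xs \<subseteq> carrier_vec n" "set ys \<subseteq> carrier_vec n" using onl_carrier[OF on] by auto
  have bc: "b \<in> carrier_vec n" using mult_mat_vec_carrier[OF Y d(1)] d(2) by simp
  have "\<forall>x\<in>set xs. x \<bullet> b = 0"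
  proof
    fix x assume x: "x \<in> set xs"
    have xc: "x \<in> carrier_vec n" using x cx by auto
    have "\<forall>y\<in>set ys. y \<bullet> x = 0"
    proof
      fix y assume y: "y \<in> set ys"
      have "y \<noteq> x" using x y onl_distinct[OF on] by auto
      thus "y \<bullet> x = 0" using onl_orth[OF on, of y x] x y by auto
    qed
    hence Yx: "?Y\<^sup>T *\<^sub>v x = 0\<^sub>v (length ys)" using orth_list_iff[OF cx(2) xc] by simp
    have "x \<bullet> b = (?Y\<^sup>T *\<^sub>v x) \<bullet> d" unfolding d(2) using transpose_vec_mult_scalar[OF Y d(1) xc] by simp
    thus "x \<bullet> b = 0" using Yx d by simp
  qed
  hence Xb: "?X\<^sup>T *\<^sub>v b = 0\<^sub>v (length xs)" using orth_list_iff[OF cx(1) bc] by simp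
  have "a \<bullet> b = c \<bullet> (?X\<^sup>T *\<^sub>v b)"
  proof -
    have "a \<bullet> b = b \<bullet> a" using mult_mat_vec_carrier[OF X c(1)] c(2) bc comm_scalar_prod by metis
    also have "\<dots> = (?X\<^sup>T *\<^sub>v b) \<bullet> c" unfolding c(2) using transpose_vec_mult_scalar[OF X c(1) bc] by simp
    also have "\<dots> = c \<bullet> (?X\<^sup>T *\<^sub>v b)" using c mult_mat_vec_carrier[OF trc[OF X] bc] by (intro comm_scalar_prod[of _ "length xs"]) auto
    finally show ?thesis .
  qed
  thus ?thesis using Xb c by simp
qed

lemma inv_mat:
  assumes M: "M \<in> carrier_mat n n" and cw: "set ws \<subseteq> carrier_vec n"
    and inv: "\<forall>w\<in>set ws. M *\<^sub>v w \<in> Sp n ws"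
  shows "\<exists>G \<in> carrier_mat (length ws) (length ws). M * mat_of_cols n ws = mat_of_cols n ws * G"
proof -
  let ?W = "mat_of_cols n ws"
  have W: "?W \<in> carrier_mat n (length ws)" by simp
  have MW: "M * ?W \<in> carrier_mat n (length ws)" using M W by simp
  have "set (cols (M * ?W)) \<subseteq> CS ?W"
  proof
    fix v assume "v \<in> set (cols (M * ?W))"
    then obtain j where j: "j < length ws" "v = col (M * ?W) j" using MW by (auto simp: cols_def)
    have "v = M *\<^sub>v col ?W j" using j col_mult2[OF M W j(1)] by simp
    also have "col ?W j = ws ! j" using j cw by (subst col_mat_of_cols) auto
    finally have "v = M *\<^sub>v ws ! j" .
    thus "v \<in> CS ?W" using inv j by (auto simp: Sp_CS)
  qed
  from cols_in_CS[OF W this] obtain G where G: "G \<in> carrier_mat (length ws) (length (cols (M * ?W)))"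
    "mat_of_cols n (cols (M * ?W)) = ?W * G" by blast
  have "mat_of_cols n (cols (M * ?W)) = M * ?W" using mat_of_cols_cols[of "M * ?W"] MW M by simp
  moreover have "length (cols (M * ?W)) = length ws" using MW by simp
  ultimately have "M * ?W = ?W * G" "G \<in> carrier_mat (length ws) (length ws)" using G by auto
  thus ?thesis by blast
qed

lemma orth_prod:
  fixes W Q :: "real mat"
  assumes W: "W \<in> carrier_mat n p" and WW: "W\<^sup>T * W = 1\<^sub>m p"
    and Q: "Q \<in> carrier_mat p q" and QQ: "Q\<^sup>T * Q = 1\<^sub>m q"
  shows "(W * Q)\<^sup>T * (W * Q) = 1\<^sub>m q"
proof -
  have WQ: "W * Q \<in> carrier_mat n q" using W Q by simp
  have "(W * Q)\<^sup>T = Q\<^sup>T * W\<^sup>T" by (rule transpose_mult[OF W Q])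
  hence "(W * Q)\<^sup>T * (W * Q) = Q\<^sup>T * W\<^sup>T * (W * Q)" by simp
  also have "\<dots> = Q\<^sup>T * (W\<^sup>T * (W * Q))" by (rule assoc_mult_mat[OF trc[OF Q] trc[OF W] WQ])
  also have "W\<^sup>T * (W * Q) = (W\<^sup>T * W) * Q" by (rule assoc_mult_mat[symmetric, OF trc[OF W] W Q])
  also have "\<dots> = Q" using WW Q by simp
  finally show ?thesis using QQ by simp
qed

lemma eig_block:
  fixes M :: "real mat"
  assumes M: "M \<in> carrier_mat n n" and sym: "M\<^sup>T = M" and on: "onl n ws"
    and inv: "\<forall>w\<in>set ws. M *\<^sub>v w \<in> Sp n ws"
  shows "\<exists>vs. onl n vs \<and> length vs = length ws \<and> set vs \<subseteq> Sp n ws \<and> Sp n ws \<subseteq> Sp n vs \<and>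
     (\<forall>v\<in>set vs. \<exists>mu. M *\<^sub>v v = mu \<cdot>\<^sub>v v)"
proof -
  let ?W = "mat_of_cols n ws" and ?p = "length ws"
  have W: "?W \<in> carrier_mat n ?p" by simp
  have WW: "?W\<^sup>T * ?W = 1\<^sub>m ?p" using onl_mat[OF on] .
  obtain G where G: "G \<in> carrier_mat ?p ?p" "M * ?W = ?W * G"
    using inv_mat[OF M onl_carrier[OF on] inv] by blast
  obtain Q ds where Q: "Q \<in> carrier_mat ?p ?p" "Q\<^sup>T * Q = 1\<^sub>m ?p"
    "\<forall>j<?p. M *\<^sub>v col (?W * Q) j = ds j \<cdot>\<^sub>v col (?W * Q) j"
    using spec_ind[OF M sym W WW G(1) G(2)] by blast
  define R where "R = ?W * Q"
  have R: "R \<in> carrier_mat n ?p" unfolding R_def using mult_carrier_mat[OF W Q(1)] .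
  have RR: "R\<^sup>T * R = 1\<^sub>m ?p" unfolding R_def by (rule orth_prod[OF W WW Q(1) Q(2)])
  have on2: "onl n (cols R)" and l2: "length (cols R) = ?p" using mat_onl[OF R RR] by auto
  have mR: "mat_of_cols n (cols R) = R" using mat_of_cols_cols[of R] R by simp
  have s1: "set (cols R) \<subseteq> Sp n ws"
  proof
    fix v assume "v \<in> set (cols R)"
    then obtain j where j: "j < ?p" "v = col R j" using R by (auto simp: cols_def)
    have "v = ?W *\<^sub>v col Q j" unfolding j R_def by (rule col_mult2[OF W Q(1) j(1)])
    moreover have "col Q j \<in> carrier_vec ?p" using Q j by simp
    ultimately show "v \<in> Sp n ws" unfolding Sp_def by auto
  qed
  have s2: "Sp n ws \<subseteq> Sp n (cols R)"
  proof
    fix x assume "x \<in> Sp n ws"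
    then obtain c where c: "c \<in> carrier_vec ?p" "x = ?W *\<^sub>v c" unfolding Sp_def by auto
    have QQ': "Q * Q\<^sup>T = 1\<^sub>m ?p" by (rule square_orth_inv[OF Q(1) Q(2)])
    have Qc: "Q\<^sup>T *\<^sub>v c \<in> carrier_vec ?p" using Q c by simp
    have "x = ?W *\<^sub>v ((Q * Q\<^sup>T) *\<^sub>v c)" using QQ' c by simp
    also have "(Q * Q\<^sup>T) *\<^sub>v c = Q *\<^sub>v (Q\<^sup>T *\<^sub>v c)" by (rule assoc_mult_mat_vec[OF Q(1) trc[OF Q(1)] c(1)])
    also have "?W *\<^sub>v (Q *\<^sub>v (Q\<^sup>T *\<^sub>v c)) = R *\<^sub>v (Q\<^sup>T *\<^sub>v c)" unfolding R_def
      by (rule assoc_mult_mat_vec[symmetric, OF W Q(1) Qc])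
    finally have "x = mat_of_cols n (cols R) *\<^sub>v (Q\<^sup>T *\<^sub>v c)" using mR by simp
    thus "x \<in> Sp n (cols R)" unfolding Sp_def using Qc l2 by auto
  qed
  have ev: "\<forall>v\<in>set (cols R). \<exists>mu. M *\<^sub>v v = mu \<cdot>\<^sub>v v"
  proof
    fix v assume "v \<in> set (cols R)"
    then obtain j where j: "j < ?p" "v = col R j" using R by (auto simp: cols_def)
    thus "\<exists>mu. M *\<^sub>v v = mu \<cdot>\<^sub>v v" using Q(3) unfolding R_def by blast
  qed
  show ?thesis using on2 l2 s1 s2 ev by blast
qed

lemma vec_aux:
  fixes ai ei aj ej :: "real vec"
  assumes c: "ai \<in> carrier_vec n" "ei \<in> carrier_vec n" "aj \<in> carrier_vec n" "ej \<in> carrier_vec n"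
    and eq: "ai \<bullet> aj = (ai + ei) \<bullet> (aj + ej)"
  shows "ai \<bullet> ej = - (ei \<bullet> (aj + ej))"
proof -
  have "(ai + ei) \<bullet> (aj + ej) = ai \<bullet> (aj + ej) + ei \<bullet> (aj + ej)"
    using c by (intro add_scalar_prod_distrib[of _ n]) auto
  also have "ai \<bullet> (aj + ej) = ai \<bullet> aj + ai \<bullet> ej" using c by (intro scalar_prod_add_distrib[of _ n]) auto
  finally show ?thesis using eq by linarith
qed

lemma gram_aux:
  fixes A E :: "real mat"
  assumes A: "A \<in> carrier_mat m n" and E: "E \<in> carrier_mat m n"
    and eq: "A * A\<^sup>T = (A + E) * (A + E)\<^sup>T"
  shows "A * E\<^sup>T = E * (- ((A + E)\<^sup>T))"
proof (rule eq_matI)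
  have B: "A + E \<in> carrier_mat m n" using A E by simp
  have dB: "dim_row (A + E) = m" "dim_col (A + E) = n" using B by auto
  fix i j assume "i < dim_row (E * (- ((A + E)\<^sup>T)))" "j < dim_col (E * (- ((A + E)\<^sup>T)))"
  hence i: "i < m" and j: "j < m" using E B by auto
  have ri: "row A i \<in> carrier_vec n" "row E i \<in> carrier_vec n" using A E i by auto
  have rj: "row A j \<in> carrier_vec n" "row E j \<in> carrier_vec n" using A E j by auto
  have rBi: "row (A + E) i = row A i + row E i" using A E i by simp
  have rBj: "row (A + E) j = row A j + row E j" using A E j by simp
  have "(A * A\<^sup>T) $$ (i,j) = row A i \<bullet> row A j" using A i j by simp
  moreover have "((A + E) * (A + E)\<^sup>T) $$ (i,j) = row (A + E) i \<bullet> row (A + E) j" using dB i j by simp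
  ultimately have e1: "row A i \<bullet> row A j = (row A i + row E i) \<bullet> (row A j + row E j)"
    using eq rBi rBj by simp
  have "(A * E\<^sup>T) $$ (i,j) = row A i \<bullet> row E j" using A E i j by simp
  also have "\<dots> = - (row E i \<bullet> (row A j + row E j))" by (rule vec_aux[OF ri(1) ri(2) rj e1])
  also have "row A j + row E j = col ((A + E)\<^sup>T) j" using rBj dB j by simp
  also have "- (row E i \<bullet> col ((A + E)\<^sup>T) j) = row E i \<bullet> col (- ((A + E)\<^sup>T)) j"
    using B E i j by simp
  also have "\<dots> = (E * (- ((A + E)\<^sup>T))) $$ (i,j)" using B E i j by simp
  finally show "(A * E\<^sup>T) $$ (i,j) = (E * (- ((A + E)\<^sup>T))) $$ (i,j)" .
qed (use A E in auto)

lemma down_closed: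
  fixes n :: nat and P :: "nat \<Rightarrow> bool"
  assumes "\<forall>i j. i \<le> j \<longrightarrow> j < n \<longrightarrow> P j \<longrightarrow> P i"
  shows "\<exists>p\<le>n. \<forall>j<n. P j = (j < p)"
  using assms
proof (induction n)
  case 0 thus ?case by auto
next
  case (Suc n)
  then obtain p where p: "p \<le> n" "\<forall>j<n. P j = (j < p)" by auto
  show ?case
  proof (cases "P n")
    case True
    have "\<forall>j<n. P j"
    proof (intro allI impI)
      fix j assume "j < n"
      hence "j \<le> n" "n < Suc n" by auto
      thus "P j" using Suc.prems True by blast
    qed
    hence "\<forall>j<Suc n. P j" using True less_Suc_eq by auto
    thus ?thesis by (intro exI[of _ "Suc n"]) auto
  next
    case False
    thus ?thesis using p by (intro exI[of _ p]) (auto simp: less_Suc_eq)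
  qed
qed

lemma span_Sp:
  assumes "set us \<subseteq> carrier_vec n"
  shows "LinearCombinations.module.span class_ring (module_vec TYPE(real) n) (set us) = Sp n us"
proof -
  interpret vec_space "TYPE(real)" n .
  have "span (set us) = col_space (mat_of_cols n us)"
    unfolding col_space_def using cols_mat_of_cols[OF assms] by simp
  also have "\<dots> = {y \<in> carrier_vec n. \<exists>x\<in>carrier_vec (length us). mat_of_cols n us *\<^sub>v x = y}"
    using col_space_eq[OF mat_of_cols_carrier(1)[of n us]] by simp
  also have "\<dots> = Sp n us"
  proof (rule subset_antisym; rule subsetI)
    fix y assume "y \<in> {y \<in> carrier_vec n. \<exists>x\<in>carrier_vec (length us). mat_of_cols n us *\<^sub>v x = y}"
    then obtain x where "x \<in> carrier_vec (length us)" "y = mat_of_cols n us *\<^sub>v x" by blast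
    thus "y \<in> Sp n us" unfolding Sp_def by blast
  next
    fix y assume "y \<in> Sp n us"
    then obtain x where x: "x \<in> carrier_vec (length us)" "y = mat_of_cols n us *\<^sub>v x" unfolding Sp_def by blast
    have "y \<in> carrier_vec n" using x mult_mat_vec_carrier[OF mat_of_cols_carrier(1)[of n us] x(1)] by simp
    thus "y \<in> {y \<in> carrier_vec n. \<exists>x\<in>carrier_vec (length us). mat_of_cols n us *\<^sub>v x = y}" using x by blast
  qed
  finally show ?thesis .
qed

lemma Row_CS:
  assumes E: "E \<in> carrier_mat m n"
  shows "Row E = CS (E\<^sup>T)"
proof -
  have "Row E = {w \<in> carrier_vec n. \<exists>y\<in>carrier_vec m. E\<^sup>T *\<^sub>v y = w}"
    unfolding Row_def using vec_space.row_space_eq[OF E] E by simp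
  also have "\<dots> = CS (E\<^sup>T)"
  proof (rule subset_antisym; rule subsetI)
    fix y assume "y \<in> {w \<in> carrier_vec n. \<exists>y\<in>carrier_vec m. E\<^sup>T *\<^sub>v y = w}"
    then obtain x where "x \<in> carrier_vec m" "y = E\<^sup>T *\<^sub>v x" by blast
    thus "y \<in> CS (E\<^sup>T)" unfolding CS_def using E by auto
  next
    fix y assume "y \<in> CS (E\<^sup>T)"
    then obtain x where x: "x \<in> carrier_vec m" "y = E\<^sup>T *\<^sub>v x" unfolding CS_def using E by auto
    have "y \<in> carrier_vec n" using x mult_mat_vec_carrier[OF trc[OF E] x(1)] by simp
    thus "y \<in> {w \<in> carrier_vec n. \<exists>y\<in>carrier_vec m. E\<^sup>T *\<^sub>v y = w}" using x by blast
  qed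
  finally show ?thesis .
qed

lemma Col_CS:
  assumes E: "E \<in> carrier_mat m n"
  shows "Col E = CS E"
proof -
  have "Col E = {y \<in> carrier_vec m. \<exists>x\<in>carrier_vec n. E *\<^sub>v x = y}"
    unfolding Col_def using vec_space.col_space_eq[OF E] E by simp
  also have "\<dots> = CS E"
  proof (rule subset_antisym; rule subsetI)
    fix y assume "y \<in> {y \<in> carrier_vec m. \<exists>x\<in>carrier_vec n. E *\<^sub>v x = y}"
    then obtain x where "x \<in> carrier_vec n" "y = E *\<^sub>v x" by blast
    thus "y \<in> CS E" unfolding CS_def using E by auto
  next
    fix y assume "y \<in> CS E"
    then obtain x where x: "x \<in> carrier_vec n" "y = E *\<^sub>v x" unfolding CS_def using E by auto
    have "y \<in> carrier_vec m" using x mult_mat_vec_carrier[OF E x(1)] by simp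
    thus "y \<in> {y \<in> carrier_vec m. \<exists>x\<in>carrier_vec n. E *\<^sub>v x = y}" using x by blast
  qed
  finally show ?thesis .
qed


theorem lemma3p4:
  fixes A E :: "real mat" and k :: nat
  assumes "realizable E"
    and "mat_rank E = k"
    and "A \<in> carrier_mat (dim_row E) (dim_col E)"
    and "zero_one_mat A"
    and "gram_mates A (A + E)"
  shows "\<exists>U S V. svd A U S V \<and>
           (\<exists>I. I \<subseteq> {..<min (dim_row A) (dim_col A)} \<and> card I = k \<and>
                (\<forall>i\<in>I. S $$ (i,i) > 0) \<and>
                inj_on (col V) I \<and> inj_on (col U) I \<and>
                basis_of (dim_col E) (Row E) (col V ` I) \<and>
                basis_of (dim_row E) (Col E) (col U ` I))"
proof -
  define m where "m = dim_row E"
  define n where "n = dim_col E"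
  have A: "A \<in> carrier_mat m n" using assms(3) unfolding m_def n_def .
  have Ec: "E \<in> carrier_mat m n" unfolding m_def n_def carrier_mat_def by simp
  have dA: "dim_row A = m" "dim_col A = n" using A by auto
  define B where "B = A + E"
  have Bc: "B \<in> carrier_mat m n" unfolding B_def using A Ec by simp
  have AAT: "A * A\<^sup>T = B * B\<^sup>T" and ATA: "A\<^sup>T * A = B\<^sup>T * B"
    using assms(5) unfolding gram_mates_def B_def by auto
  have AT: "A\<^sup>T \<in> carrier_mat n m" and ET: "E\<^sup>T \<in> carrier_mat n m" and BT: "B\<^sup>T \<in> carrier_mat n m"
    using A Ec Bc by auto
  have BTs: "B\<^sup>T = A\<^sup>T + E\<^sup>T" unfolding B_def by (rule transpose_add[OF A Ec])
  define C1 where "C1 = - (B\<^sup>T)"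
  have C1: "C1 \<in> carrier_mat n m" unfolding C1_def using BT by simp
  have K1m: "A * E\<^sup>T = E * C1" unfolding C1_def B_def by (rule gram_aux[OF A Ec AAT[unfolded B_def]])
  define C2 where "C2 = - B"
  have C2: "C2 \<in> carrier_mat m n" unfolding C2_def using Bc by simp
  have K2m: "A\<^sup>T * E = E\<^sup>T * C2"
  proof -
    have BB: "(A\<^sup>T + E\<^sup>T)\<^sup>T = B" using BTs by (metis transpose_transpose)
    have "A\<^sup>T * (A\<^sup>T)\<^sup>T = (A\<^sup>T + E\<^sup>T) * (A\<^sup>T + E\<^sup>T)\<^sup>T" unfolding BB using ATA BTs by simp
    from gram_aux[OF AT ET this] show ?thesis unfolding C2_def BTs[symmetric] by simp
  qed
  have K1: "A *\<^sub>v (E\<^sup>T *\<^sub>v y) = E *\<^sub>v (C1 *\<^sub>v y)" if y: "y \<in> carrier_vec m" for y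
  proof -
    have "A *\<^sub>v (E\<^sup>T *\<^sub>v y) = (A * E\<^sup>T) *\<^sub>v y" by (rule assoc_mult_mat_vec[symmetric, OF A ET y])
    also have "\<dots> = (E * C1) *\<^sub>v y" using K1m by simp
    also have "\<dots> = E *\<^sub>v (C1 *\<^sub>v y)" by (rule assoc_mult_mat_vec[OF Ec C1 y])
    finally show ?thesis .
  qed
  have K2: "A\<^sup>T *\<^sub>v (E *\<^sub>v x) = E\<^sup>T *\<^sub>v (C2 *\<^sub>v x)" if x: "x \<in> carrier_vec n" for x
  proof -
    have "A\<^sup>T *\<^sub>v (E *\<^sub>v x) = (A\<^sup>T * E) *\<^sub>v x" by (rule assoc_mult_mat_vec[symmetric, OF AT Ec x])
    also have "\<dots> = (E\<^sup>T * C2) *\<^sub>v x" using K2m by simp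
    also have "\<dots> = E\<^sup>T *\<^sub>v (C2 *\<^sub>v x)" by (rule assoc_mult_mat_vec[OF ET C2 x])
    finally show ?thesis .
  qed
  define M where "M = A\<^sup>T * A"
  have M: "M \<in> carrier_mat n n" unfolding M_def using A by simp
  have Msym: "M\<^sup>T = M" unfolding M_def using transpose_mult[OF AT A] by simp
  have Mv: "M *\<^sub>v v = A\<^sup>T *\<^sub>v (A *\<^sub>v v)" if "v \<in> carrier_vec n" for v
    unfolding M_def by (rule assoc_mult_mat_vec[OF AT A that])
  have RowE: "Row E = CS (E\<^sup>T)" by (rule Row_CS[OF Ec])
  have ColE: "Col E = CS E" by (rule Col_CS[OF Ec])
  have Minv: "M *\<^sub>v x \<in> CS (E\<^sup>T)" if x: "x \<in> CS (E\<^sup>T)" for x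
  proof -
    obtain y where y: "y \<in> carrier_vec m" "x = E\<^sup>T *\<^sub>v y" using x ET unfolding CS_def by auto
    have xc: "x \<in> carrier_vec n" using y ET by simp
    have "M *\<^sub>v x = A\<^sup>T *\<^sub>v (E *\<^sub>v (C1 *\<^sub>v y))" using Mv[OF xc] K1[OF y(1)] y(2) by simp
    also have "\<dots> = E\<^sup>T *\<^sub>v (C2 *\<^sub>v (C1 *\<^sub>v y))" by (rule K2) (use C1 y in simp)
    finally show ?thesis using CS_mem[OF ET] C2 C1 y by simp
  qed
  have on0: "onl n []" unfolding onl_def by simp
  obtain ws1 where ws1: "onl n ws1" "set ws1 \<subseteq> CS (E\<^sup>T)" "CS (E\<^sup>T) \<subseteq> Sp n ws1"
    using onl_grow[OF ET on0] by auto
  obtain ws2 where ws12: "onl n (ws1 @ ws2)" "length (ws1 @ ws2) = n"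
    using onl_extend[OF ws1(1)] by blast
  have ws2: "onl n ws2" using onl_sub[OF ws12(1)] onl_distinct[OF ws12(1)] by auto
  have cws1: "set ws1 \<subseteq> carrier_vec n" using onl_carrier[OF ws1(1)] .
  have cws2: "set ws2 \<subseteq> carrier_vec n" using onl_carrier[OF ws2] .
  have inv1: "\<forall>w\<in>set ws1. M *\<^sub>v w \<in> Sp n ws1" using ws1 Minv by blast
  have inv2: "\<forall>w\<in>set ws2. M *\<^sub>v w \<in> Sp n ws2"
  proof
    fix w assume w: "w \<in> set ws2"
    have wc: "w \<in> carrier_vec n" using w cws2 by auto
    have Mw: "M *\<^sub>v w \<in> carrier_vec n" using M wc by simp
    have "\<forall>y\<in>set ws1. y \<bullet> (M *\<^sub>v w) = 0"
    proof
      fix y assume y: "y \<in> set ws1"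
      have yc: "y \<in> carrier_vec n" using y cws1 by auto
      have "y \<bullet> (M *\<^sub>v w) = (M\<^sup>T *\<^sub>v y) \<bullet> w" using transpose_vec_mult_scalar[OF M wc yc] by simp
      also have "\<dots> = (M *\<^sub>v y) \<bullet> w" using Msym by simp
      also have "\<dots> = 0" by (rule Sp_orth[OF ws12(1)]) (use inv1 y set_Sp[OF cws2] w in auto)
      finally show "y \<bullet> (M *\<^sub>v w) = 0" .
    qed
    hence "M *\<^sub>v w = mat_of_cols n ws2 *\<^sub>v ((mat_of_cols n ws2)\<^sup>T *\<^sub>v (M *\<^sub>v w))"
      by (rule decomp_compl[OF ws12(1) ws12(2) Mw, rotated])
    moreover have "(mat_of_cols n ws2)\<^sup>T *\<^sub>v (M *\<^sub>v w) \<in> carrier_vec (length ws2)"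
      by (rule mult_mat_vec_carrier[OF trc[OF mat_of_cols_carrier(1)] Mw])
    ultimately show "M *\<^sub>v w \<in> Sp n ws2" unfolding Sp_def by blast
  qed
  obtain vs1 where vs1: "onl n vs1" "length vs1 = length ws1" "set vs1 \<subseteq> Sp n ws1" "Sp n ws1 \<subseteq> Sp n vs1"
    "\<forall>v\<in>set vs1. \<exists>mu. M *\<^sub>v v = mu \<cdot>\<^sub>v v"
    using eig_block[OF M Msym ws1(1) inv1] by blast
  obtain vs2 where vs2: "onl n vs2" "length vs2 = length ws2" "set vs2 \<subseteq> Sp n ws2" "Sp n ws2 \<subseteq> Sp n vs2"
    "\<forall>v\<in>set vs2. \<exists>mu. M *\<^sub>v v = mu \<cdot>\<^sub>v v"
    using eig_block[OF M Msym ws2 inv2] by blast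
  define vs where "vs = vs1 @ vs2"
  have onvs: "onl n vs" unfolding vs_def
    by (rule onl_append[OF vs1(1) vs2(1)]) (use vs1(3) vs2(3) Sp_orth[OF ws12(1)] in blast)
  have lvs: "length vs = n" unfolding vs_def using vs1(2) vs2(2) ws12(2) by simp
  have Sp1: "Sp n ws1 \<subseteq> CS (E\<^sup>T)"
    using CS_mono[OF ET mat_of_cols_carrier(1)[of n ws1]] ws1(2) cws1 by (simp add: Sp_CS cols_mat_of_cols)
  have F1: "set vs1 \<subseteq> CS (E\<^sup>T)" using vs1(3) Sp1 by auto
  have F2: "CS (E\<^sup>T) \<subseteq> Sp n vs1" using ws1(3) vs1(4) by auto
  have F3: "\<forall>v\<in>set vs2. \<forall>y\<in>CS (E\<^sup>T). v \<bullet> y = 0"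
  proof (intro ballI)
    fix v y assume v: "v \<in> set vs2" and y: "y \<in> CS (E\<^sup>T)"
    have "y \<bullet> v = 0" by (rule Sp_orth[OF ws12(1)]) (use ws1(3) y vs2(3) v in auto)
    moreover have "v \<in> carrier_vec n" "y \<in> carrier_vec n" using v onl_carrier[OF vs2(1)] y CS_carrier[OF ET] by auto
    ultimately show "v \<bullet> y = 0" using comm_scalar_prod by metis
  qed
  have F4: "\<forall>v\<in>set vs. \<exists>mu. M *\<^sub>v v = mu \<cdot>\<^sub>v v" using vs1(5) vs2(5) unfolding vs_def by auto
  have cvs: "set vs \<subseteq> carrier_vec n" using onl_carrier[OF onvs] .
  define lam where "lam v = (A *\<^sub>v v) \<bullet> (A *\<^sub>v v)" for v
  have AO: "(A *\<^sub>v v) \<bullet> (A *\<^sub>v w) = (if v = w then lam v else 0)" if v: "v \<in> set vs" and w: "w \<in> set vs" for v w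
  proof -
    obtain mu where mu: "M *\<^sub>v v = mu \<cdot>\<^sub>v v" using F4 v by blast
    have vc: "v \<in> carrier_vec n" and wc: "w \<in> carrier_vec n" using v w cvs by auto
    have e: "(A *\<^sub>v v) \<bullet> (A *\<^sub>v x) = mu * (v \<bullet> x)" if x: "x \<in> carrier_vec n" for x
    proof -
      have "(A *\<^sub>v v) \<bullet> (A *\<^sub>v x) = (A\<^sup>T *\<^sub>v (A *\<^sub>v v)) \<bullet> x"
        using transpose_vec_mult_scalar[OF A x mult_mat_vec_carrier[OF A vc]] by simp
      also have "\<dots> = (mu \<cdot>\<^sub>v v) \<bullet> x" using Mv[OF vc] mu by simp
      also have "\<dots> = mu * (v \<bullet> x)" using vc x by simp
      finally show ?thesis .
    qed
    show ?thesis
    proof (cases "v = w")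
      case True
      have "lam v = mu * (v \<bullet> v)" unfolding lam_def using e[OF vc] .
      thus ?thesis using True e[OF wc] by simp
    next
      case False
      thus ?thesis using e[OF wc] onl_orth[OF onvs v w] by simp
    qed
  qed
  define vs' where "vs' = sort_key (\<lambda>v. - lam v) vs"
  have svs': "set vs' = set vs" unfolding vs'_def by simp
  have dvs': "distinct vs'" unfolding vs'_def using onl_distinct[OF onvs] by simp
  have lvs': "length vs' = n" unfolding vs'_def using lvs by simp
  have onvs': "onl n vs'" using onl_sub[OF onvs _ dvs'] svs' by simp
  have srt: "sorted (map (\<lambda>v. - lam v) vs')" unfolding vs'_def by (rule sorted_sort_key)
  define l where "l j = lam (vs' ! j)" for j
  have mono: "l j \<le> l i" if "i \<le> j" "j < n" for i j
  proof -
    have "map (\<lambda>v. - lam v) vs' ! i \<le> map (\<lambda>v. - lam v) vs' ! j"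
      using sorted_nth_mono[OF srt that(1)] that lvs' by simp
    thus ?thesis using that lvs' unfolding l_def by simp
  qed
  have vj: "vs' ! j \<in> set vs" "vs' ! j \<in> carrier_vec n" if "j < n" for j
    using that lvs' svs' cvs by (auto simp: nth_mem[of j vs', unfolded lvs'])
  have l0: "0 \<le> l j" for j unfolding l_def lam_def by (rule sq_ge0)
  obtain p where p: "p \<le> n" "\<forall>j<n. (0 < l j) = (j < p)"
  proof -
    have "\<forall>i j. i \<le> j \<longrightarrow> j < n \<longrightarrow> 0 < l j \<longrightarrow> 0 < l i" using mono by fastforce
    from down_closed[OF this] show ?thesis using that by blast
  qed
  have Avz: "A *\<^sub>v (vs' ! j) = 0\<^sub>v m" if "j < n" "\<not> j < p" for j
  proof -
    have "l j = 0" using p(2) that l0[of j] by force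
    hence "(A *\<^sub>v (vs' ! j)) \<bullet> (A *\<^sub>v (vs' ! j)) = 0" unfolding l_def lam_def .
    thus ?thesis using sq_eq0[OF mult_mat_vec_carrier[OF A vj(2)[OF that(1)]]] by simp
  qed
  define u where "u j = (1 / sqrt (l j)) \<cdot>\<^sub>v (A *\<^sub>v (vs' ! j))" for j
  have uc: "u j \<in> carrier_vec m" if "j < n" for j unfolding u_def using A vj(2)[OF that] by simp
  define us0 where "us0 = map u [0..<p]"
  have lus0: "length us0 = p" unfolding us0_def by simp
  have cus0: "set us0 \<subseteq> carrier_vec m" unfolding us0_def using uc p(1) by auto
  have uu: "u i \<bullet> u j = (if i = j then 1 else 0)" if "i < p" "j < p" for i j
  proof -
    have ij: "i < n" "j < n" using that p(1) by auto
    have lp: "0 < l i" "0 < l j" using p(2) ij that by auto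
    have "u i \<bullet> u j = (1 / sqrt (l i)) * ((1 / sqrt (l j)) * ((A *\<^sub>v (vs' ! i)) \<bullet> (A *\<^sub>v (vs' ! j))))"
      unfolding u_def using A vj(2)[OF ij(1)] vj(2)[OF ij(2)] by simp
    also have "(A *\<^sub>v (vs' ! i)) \<bullet> (A *\<^sub>v (vs' ! j)) = (if i = j then l i else 0)"
      using AO[OF vj(1)[OF ij(1)] vj(1)[OF ij(2)]] nth_eq_iff_index_eq[OF dvs'] ij lvs' unfolding l_def by auto
    finally show ?thesis using lp by (auto simp: field_simps real_sqrt_mult[symmetric])
  qed
  have U0U0: "(mat_of_cols m us0)\<^sup>T * mat_of_cols m us0 = 1\<^sub>m p"
  proof (rule eq_matI)
    fix i j assume "i < dim_row (1\<^sub>m p :: real mat)" "j < dim_col (1\<^sub>m p :: real mat)"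
    hence ij: "i < p" "j < p" by auto
    have "((mat_of_cols m us0)\<^sup>T * mat_of_cols m us0) $$ (i,j) = us0 ! i \<bullet> us0 ! j"
      by (rule mat_of_cols_T_mult_index[OF cus0 cus0]) (use ij lus0 in auto)
    also have "\<dots> = u i \<bullet> u j" unfolding us0_def using ij by simp
    finally show "((mat_of_cols m us0)\<^sup>T * mat_of_cols m us0) $$ (i,j) = 1\<^sub>m p $$ (i,j)"
      using uu[OF ij] ij by simp
  qed (use lus0 in auto)
  have onus0: "onl m us0"
    using mat_onl(1)[OF _ U0U0] cols_mat_of_cols[OF cus0] lus0 mat_of_cols_carrier(1)[of m us0] by simp
  have pm: "p \<le> m" using onl_length_le[OF onus0] lus0 by simp
  obtain zs where zs: "onl m (us0 @ zs)" "length (us0 @ zs) = m" using onl_extend[OF onus0] by blast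
  define U where "U = mat_of_cols m (us0 @ zs)"
  define V where "V = mat_of_cols n vs'"
  define S where "S = mat m n (\<lambda>(i,j). if i = j then sqrt (l j) else 0)"
  have U: "U \<in> carrier_mat m m" unfolding U_def using zs(2) mat_of_cols_carrier(1)[of m "us0 @ zs"] by simp
  have V: "V \<in> carrier_mat n n" unfolding V_def using lvs' mat_of_cols_carrier(1)[of n vs'] by simp
  have S: "S \<in> carrier_mat m n" unfolding S_def by simp
  have UU: "U\<^sup>T * U = 1\<^sub>m m" unfolding U_def using onl_mat[OF zs(1)] zs(2) by simp
  have VV: "V\<^sup>T * V = 1\<^sub>m n" unfolding V_def using onl_mat[OF onvs'] lvs' by simp
  have VV': "V * V\<^sup>T = 1\<^sub>m n" by (rule square_orth_inv[OF V VV])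
  have cU: "set (us0 @ zs) \<subseteq> carrier_vec m" using onl_carrier[OF zs(1)] .
  have colU: "col U j = (us0 @ zs) ! j" if "j < m" for j
  proof -
    have "(us0 @ zs) ! j \<in> set (us0 @ zs)" using that zs(2) by (intro nth_mem) simp
    hence "(us0 @ zs) ! j \<in> carrier_vec m" using cU by blast
    thus ?thesis unfolding U_def using that zs(2) by (subst col_mat_of_cols) auto
  qed
  have colU0: "col U j = u j" if "j < p" for j
    using colU[of j] that pm lus0 by (simp add: nth_append us0_def)
  have colV: "col V j = vs' ! j" if "j < n" for j
    unfolding V_def using that lvs' vj(2)[OF that] by (subst col_mat_of_cols) auto
  have AV: "A * V = U * S"
  proof (rule mat_col_eqI)
    fix j assume "j < dim_col (U * S)"
    hence j: "j < n" using S by simp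
    have c1: "col (A * V) j = A *\<^sub>v (vs' ! j)" using col_mult2[OF A V j] colV[OF j] by simp
    have c2: "col (U * S) j = U *\<^sub>v col S j" by (rule col_mult2[OF U S j])
    show "col (A * V) j = col (U * S) j"
    proof (cases "j < p")
      case True
      hence jm: "j < m" using pm by simp
      have cS: "col S j = sqrt (l j) \<cdot>\<^sub>v unit_vec m j"
        unfolding S_def using j jm by (auto simp: vec_eq_iff unit_vec_def)
      have "U *\<^sub>v col S j = sqrt (l j) \<cdot>\<^sub>v (U *\<^sub>v unit_vec m j)"
        unfolding cS by (rule mult_mat_vec[OF U unit_vec_carrier])
      also have "U *\<^sub>v unit_vec m j = u j" using mat_unit_col[OF U jm] colU0[OF True] by simp
      also have "sqrt (l j) \<cdot>\<^sub>v u j = A *\<^sub>v (vs' ! j)"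
      proof -
        have "0 < l j" using p(2) j True by simp
        thus ?thesis unfolding u_def by (simp add: smult_smult_assoc)
      qed
      finally show ?thesis using c1 c2 by simp
    next
      case False
      have lj: "l j = 0" using p(2) j False l0[of j] by force
      have cS: "col S j = 0\<^sub>v m"
        unfolding S_def using j lj by (auto simp: vec_eq_iff)
      have "U *\<^sub>v col S j = 0\<^sub>v m" unfolding cS by (rule mat_vec_zero[OF U])
      thus ?thesis using c1 c2 Avz[OF j False] by simp
    qed
  qed (use A V U S in auto)
  have Aeq: "A = U * S * V\<^sup>T"
  proof -
    have "A = A * (V * V\<^sup>T)" using VV' A by simp
    also have "\<dots> = (A * V) * V\<^sup>T" by (rule assoc_mult_mat[symmetric, OF A V trc[OF V]])
    finally show ?thesis using AV by simp
  qed
  have svdA: "svd A U S V"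
    unfolding svd_def Let_def dA
  proof (intro conjI allI impI)
    show "U \<in> carrier_mat m m" "V \<in> carrier_mat n n" "S \<in> carrier_mat m n" by fact+
    show "U\<^sup>T * U = 1\<^sub>m m" "V\<^sup>T * V = 1\<^sub>m n" by fact+
    show "A = U * S * V\<^sup>T" by fact
    fix i j assume "i < m" "j < n" "i \<noteq> j"
    thus "S $$ (i,j) = 0" unfolding S_def by simp
  next
    fix i assume "i < min m n"
    thus "0 \<le> S $$ (i,i)" unfolding S_def using l0 by simp
  next
    fix i j assume "i \<le> j" "j < min m n"
    thus "S $$ (j,j) \<le> S $$ (i,i)" unfolding S_def using mono[of i j] by simp
  qed
  have cvs1: "set vs1 \<subseteq> carrier_vec n" using onl_carrier[OF vs1(1)] .
  have vs1s: "set vs1 \<subseteq> set vs'" using svs' unfolding vs_def by auto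
  define I where "I = {j. j < n \<and> vs' ! j \<in> set vs1}"
  have Ip: "j < p" if j: "j \<in> I" for j
  proof (rule ccontr)
    assume np: "\<not> j < p"
    have jn: "j < n" and v1: "vs' ! j \<in> set vs1" using j unfolding I_def by auto
    define v where "v = vs' ! j"
    have vc: "v \<in> carrier_vec n" unfolding v_def using vj(2)[OF jn] .
    have vv: "v \<bullet> v = 1" unfolding v_def using onl_unit[OF onvs'] jn lvs' by simp
    have Av: "A *\<^sub>v v = 0\<^sub>v m" unfolding v_def by (rule Avz[OF jn np])
    have Bvc: "B *\<^sub>v v \<in> carrier_vec m" using Bc vc by simp
    have "(B *\<^sub>v v) \<bullet> (B *\<^sub>v v) = (B\<^sup>T *\<^sub>v (B *\<^sub>v v)) \<bullet> v"
      using transpose_vec_mult_scalar[OF Bc vc Bvc] by simp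
    also have "B\<^sup>T *\<^sub>v (B *\<^sub>v v) = (B\<^sup>T * B) *\<^sub>v v" by (rule assoc_mult_mat_vec[symmetric, OF BT Bc vc])
    also have "\<dots> = A\<^sup>T *\<^sub>v (A *\<^sub>v v)" using ATA assoc_mult_mat_vec[OF AT A vc] by simp
    also have "\<dots> = 0\<^sub>v n" using Av mat_vec_zero[OF AT] by simp
    finally have "(B *\<^sub>v v) \<bullet> (B *\<^sub>v v) = 0" using vc by simp
    hence Bv: "B *\<^sub>v v = 0\<^sub>v m" using sq_eq0[OF Bvc] by simp
    have "B *\<^sub>v v = A *\<^sub>v v + E *\<^sub>v v" unfolding B_def by (rule add_mult_distrib_mat_vec[OF A Ec vc])
    hence Ev: "E *\<^sub>v v = 0\<^sub>v m" using Av Bv Ec vc by simp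
    obtain y where y: "y \<in> carrier_vec m" "v = E\<^sup>T *\<^sub>v y" using F1 v1 ET unfolding v_def CS_def by auto
    have "v \<bullet> v = y \<bullet> (E *\<^sub>v v)" using transpose_vec_mult_scalar[OF Ec vc y(1)] y(2) by simp
    also have "\<dots> = 0" using Ev y by simp
    finally show False using vv by simp
  qed
  have Im: "I \<subseteq> {..<m}" using Ip pm by fastforce
  have Isub: "I \<subseteq> {..<min (dim_row A) (dim_col A)}" using Im unfolding I_def dA by auto
  have Ipos: "\<forall>i\<in>I. S $$ (i,i) > 0"
  proof
    fix i assume i: "i \<in> I"
    have "i < n" "i < m" using i Im unfolding I_def by auto
    moreover have "0 < l i" using p(2) Ip[OF i] \<open>i < n\<close> by simp
    ultimately show "S $$ (i,i) > 0" unfolding S_def by simp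
  qed
  have injV: "inj_on (col V) I"
  proof (rule inj_onI)
    fix i j assume "i \<in> I" "j \<in> I" "col V i = col V j"
    hence "i < n" "j < n" "vs' ! i = vs' ! j" using colV unfolding I_def by auto
    thus "i = j" using nth_eq_iff_index_eq[OF dvs'] lvs' by auto
  qed
  have dU: "distinct (us0 @ zs)" using onl_distinct[OF zs(1)] .
  have injU: "inj_on (col U) {..<m}"
  proof (rule inj_onI)
    fix i j assume "i \<in> {..<m}" "j \<in> {..<m}" "col U i = col U j"
    hence "i < m" "j < m" "(us0 @ zs) ! i = (us0 @ zs) ! j" using colU by auto
    thus "i = j" using nth_eq_iff_index_eq[OF dU] zs(2) by auto
  qed
  have injUI: "inj_on (col U) I" using inj_on_subset[OF injU Im] .
  have colVI: "col V ` I = set vs1"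
  proof
    show "col V ` I \<subseteq> set vs1" using colV unfolding I_def by auto
    show "set vs1 \<subseteq> col V ` I"
    proof
      fix v assume v: "v \<in> set vs1"
      then obtain j where j: "j < n" "v = vs' ! j" using vs1s lvs' by (metis in_set_conv_nth subsetD)
      hence "j \<in> I" unfolding I_def using v by simp
      moreover have "v = col V j" using colV[OF j(1)] j(2) by simp
      ultimately show "v \<in> col V ` I" by (rule rev_image_eqI)
    qed
  qed
  have Sp_vs1: "Sp n vs1 = CS (E\<^sup>T)"
  proof
    show "CS (E\<^sup>T) \<subseteq> Sp n vs1" by (rule F2)
    show "Sp n vs1 \<subseteq> CS (E\<^sup>T)"
      using CS_mono[OF ET mat_of_cols_carrier(1)[of n vs1]] F1 cvs1 by (simp add: Sp_CS cols_mat_of_cols)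
  qed
  have basisR: "basis_of (dim_col E) (Row E) (col V ` I)"
    unfolding basis_of_def colVI n_def[symmetric] RowE
    using F1 onl_li[OF vs1(1)] span_Sp[OF cvs1] Sp_vs1 by simp
  define ts where "ts = map (col U) (filter (\<lambda>j. j \<in> I) [0..<m])"
  have sts: "set ts = col U ` I" unfolding ts_def using Im by auto
  have dts: "distinct ts" unfolding ts_def
  proof (rule distinct_map[THEN iffD2], rule conjI)
    show "distinct (filter (\<lambda>j. j \<in> I) [0..<m])" by simp
    have "set (filter (\<lambda>j. j \<in> I) [0..<m]) \<subseteq> {..<m}" by auto
    thus "inj_on (col U) (set (filter (\<lambda>j. j \<in> I) [0..<m]))" by (rule inj_on_subset[OF injU])
  qed
  have tsU: "set ts \<subseteq> set (us0 @ zs)"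
  proof
    fix t assume "t \<in> set ts"
    then obtain j where j: "j \<in> I" "t = col U j" using sts by auto
    hence "j < m" using Im by auto
    hence "(us0 @ zs) ! j \<in> set (us0 @ zs)" using zs(2) by (intro nth_mem) simp
    thus "t \<in> set (us0 @ zs)" using colU[OF \<open>j < m\<close>] j(2) by simp
  qed
  have onts: "onl m ts" using onl_sub[OF zs(1) tsU dts] .
  have cts: "set ts \<subseteq> carrier_vec m" using onl_carrier[OF onts] .
  have tsE: "set ts \<subseteq> CS E"
  proof
    fix t assume "t \<in> set ts"
    then obtain j where j: "j \<in> I" "t = col U j" using sts by auto
    have jp: "j < p" using Ip[OF j(1)] .
    have jn: "j < n" using j(1) unfolding I_def by simp
    have "vs' ! j \<in> CS (E\<^sup>T)" using j(1) F1 unfolding I_def by auto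
    then obtain y where y: "y \<in> carrier_vec m" "vs' ! j = E\<^sup>T *\<^sub>v y" using ET unfolding CS_def by auto
    have C1y: "C1 *\<^sub>v y \<in> carrier_vec n" using C1 y by simp
    have "t = (1 / sqrt (l j)) \<cdot>\<^sub>v (E *\<^sub>v (C1 *\<^sub>v y))"
      using j(2) colU0[OF jp] K1[OF y(1)] y(2) unfolding u_def by simp
    also have "\<dots> = E *\<^sub>v ((1 / sqrt (l j)) \<cdot>\<^sub>v (C1 *\<^sub>v y))" by (rule mult_mat_vec[symmetric, OF Ec C1y])
    finally show "t \<in> CS E" using CS_mem[OF Ec] C1y by simp
  qed
  have Sp_ts: "Sp m ts = CS E"
  proof
    show "Sp m ts \<subseteq> CS E"
      using CS_mono[OF Ec mat_of_cols_carrier(1)[of m ts]] tsE cts by (simp add: Sp_CS cols_mat_of_cols)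
    show "CS E \<subseteq> Sp m ts"
    proof
      fix y assume yE: "y \<in> CS E"
      then obtain x where x: "x \<in> carrier_vec n" "y = E *\<^sub>v x" using Ec unfolding CS_def by auto
      have yc: "y \<in> carrier_vec m" using x Ec by simp
      define rest where "rest = filter (\<lambda>r. r \<notin> set ts) (us0 @ zs)"
      have srest: "set (rest @ ts) = set (us0 @ zs)" unfolding rest_def using tsU by auto
      have drest: "distinct (rest @ ts)" unfolding rest_def using dU dts by auto
      have onr: "onl m (rest @ ts)" by (rule onl_sub[OF zs(1) _ drest]) (use srest in blast)
      have lr: "length (rest @ ts) = m"
        using distinct_card[OF drest] distinct_card[OF dU] srest zs(2) by simp
      have orth: "\<forall>r\<in>set rest. r \<bullet> y = 0"
      proof
        fix r assume r: "r \<in> set rest"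
        hence r1: "r \<in> set (us0 @ zs)" and r2: "r \<notin> set ts" unfolding rest_def by auto
        obtain i where i: "i < m" "r = (us0 @ zs) ! i" using r1 zs(2) by (metis in_set_conv_nth)
        have rci: "r = col U i" using colU[OF i(1)] i(2) by simp
        have iI: "i \<notin> I" using r2 rci sts by auto
        have rc: "r \<in> carrier_vec m" using r1 cU by auto
        show "r \<bullet> y = 0"
        proof (cases "i < p")
          case True
          have iN: "i < n" using True p(1) by simp
          have v2: "vs' ! i \<in> set vs2" using vj(1)[OF iN] iI iN unfolding I_def vs_def by auto
          have vic: "vs' ! i \<in> carrier_vec n" using vj(2)[OF iN] .
          have ru: "r = u i" using rci colU0[OF True] by simp
          have Exc: "E *\<^sub>v x \<in> carrier_vec m" using Ec x by simp
          have C2x: "C2 *\<^sub>v x \<in> carrier_vec m" using C2 x by simp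
          have "(A *\<^sub>v (vs' ! i)) \<bullet> (E *\<^sub>v x) = (E *\<^sub>v x) \<bullet> (A *\<^sub>v (vs' ! i))"
            using comm_scalar_prod[OF mult_mat_vec_carrier[OF A vic] Exc] .
          also have "\<dots> = (A\<^sup>T *\<^sub>v (E *\<^sub>v x)) \<bullet> vs' ! i"
            using transpose_vec_mult_scalar[OF A vic Exc] by simp
          also have "\<dots> = (E\<^sup>T *\<^sub>v (C2 *\<^sub>v x)) \<bullet> vs' ! i" using K2[OF x(1)] by simp
          also have "\<dots> = vs' ! i \<bullet> (E\<^sup>T *\<^sub>v (C2 *\<^sub>v x))"
            using comm_scalar_prod[OF mult_mat_vec_carrier[OF ET C2x] vic] .
          also have "\<dots> = 0" using F3 v2 CS_mem[OF ET C2x] by blast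
          finally have "(A *\<^sub>v (vs' ! i)) \<bullet> (E *\<^sub>v x) = 0" .
          thus ?thesis unfolding ru u_def x(2) using mult_mat_vec_carrier[OF A vic] Exc by simp
        next
          case False
          have "i - p < length zs" using i(1) False zs(2) lus0 by simp
          hence rz: "r \<in> set zs" using i False lus0 by (simp add: nth_append)
          have ATr: "A\<^sup>T *\<^sub>v r \<in> carrier_vec n" using AT rc by simp
          have ATr0: "A\<^sup>T *\<^sub>v r = 0\<^sub>v n"
          proof (rule complete_zero[OF onvs' lvs' ATr], rule ballI)
            fix v assume v: "v \<in> set vs'"
            then obtain k where k: "k < n" "v = vs' ! k" using lvs' by (metis in_set_conv_nth)
            have vc: "v \<in> carrier_vec n" using vj(2)[OF k(1)] k(2) by simp
            have "v \<bullet> (A\<^sup>T *\<^sub>v r) = (A\<^sup>T *\<^sub>v r) \<bullet> v" using comm_scalar_prod[OF vc ATr] .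
            also have "\<dots> = r \<bullet> (A *\<^sub>v v)" using transpose_vec_mult_scalar[OF A vc rc] .
            also have "\<dots> = 0"
            proof (cases "k < p")
              case True
              have lk: "0 < l k" using p(2) k True by simp
              have "A *\<^sub>v v = sqrt (l k) \<cdot>\<^sub>v u k" unfolding u_def k(2) using lk by (simp add: smult_smult_assoc)
              moreover have "r \<bullet> u k = 0"
              proof -
                have uk: "u k \<in> set us0" unfolding us0_def using True by simp
                have "r \<noteq> u k" using rz uk dU by auto
                thus ?thesis using onl_orth[OF zs(1), of r "u k"] rz uk by simp
              qed
              ultimately show ?thesis using rc uc[OF k(1)] by simp
            next
              case False
              thus ?thesis using Avz[OF k(1) False] k(2) rc by simp
            qed
            finally show "v \<bullet> (A\<^sup>T *\<^sub>v r) = 0" .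
          qed
          have BTr: "B\<^sup>T *\<^sub>v r \<in> carrier_vec n" using BT rc by simp
          have "(B\<^sup>T *\<^sub>v r) \<bullet> (B\<^sup>T *\<^sub>v r) = r \<bullet> (B *\<^sub>v (B\<^sup>T *\<^sub>v r))"
            using transpose_vec_mult_scalar[OF Bc BTr rc] .
          also have "B *\<^sub>v (B\<^sup>T *\<^sub>v r) = (B * B\<^sup>T) *\<^sub>v r" by (rule assoc_mult_mat_vec[symmetric, OF Bc BT rc])
          also have "\<dots> = A *\<^sub>v (A\<^sup>T *\<^sub>v r)" using AAT assoc_mult_mat_vec[OF A AT rc] by simp
          also have "\<dots> = 0\<^sub>v m" using ATr0 mat_vec_zero[OF A] by simp
          finally have "(B\<^sup>T *\<^sub>v r) \<bullet> (B\<^sup>T *\<^sub>v r) = 0" using rc by simp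
          hence BTr0: "B\<^sup>T *\<^sub>v r = 0\<^sub>v n" using sq_eq0[OF BTr] by simp
          have "B\<^sup>T *\<^sub>v r = A\<^sup>T *\<^sub>v r + E\<^sup>T *\<^sub>v r" unfolding BTs by (rule add_mult_distrib_mat_vec[OF AT ET rc])
          hence ETr: "E\<^sup>T *\<^sub>v r = 0\<^sub>v n" using BTr0 ATr0 ET rc by simp
          have "r \<bullet> y = (E\<^sup>T *\<^sub>v r) \<bullet> x" unfolding x(2) using transpose_vec_mult_scalar[OF Ec x(1) rc] by simp
          thus ?thesis using ETr x(1) by simp
        qed
      qed
      have "y = mat_of_cols m ts *\<^sub>v ((mat_of_cols m ts)\<^sup>T *\<^sub>v y)"
        by (rule decomp_compl[OF onr lr yc orth])
      moreover have "(mat_of_cols m ts)\<^sup>T *\<^sub>v y \<in> carrier_vec (length ts)"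
        by (rule mult_mat_vec_carrier[OF trc[OF mat_of_cols_carrier(1)] yc])
      ultimately show "y \<in> Sp m ts" unfolding Sp_def by blast
    qed
  qed
  have basisC: "basis_of (dim_row E) (Col E) (col U ` I)"
    unfolding basis_of_def sts[symmetric] m_def[symmetric] ColE
    using tsE onl_li[OF onts] span_Sp[OF cts] Sp_ts by simp
  have cardI: "card I = k"
  proof -
    interpret vec_space "TYPE(real)" m .
    have cE: "set (cols E) \<subseteq> carrier_vec m" using Ec by (auto simp: cols_def)
    have c1: "col_space E = span (set (cols E))" by (rule col_space_def)
    have c2: "Col E = col_space E" unfolding Col_def m_def by simp
    have "span (set ts) = span (set (cols E))"
      using span_Sp[OF cts] Sp_ts ColE c1 c2 by simp
    hence "vectorspace.dim class_ring (span_vs (set (cols E))) = card (set ts)"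
      using dim_eq_card[OF cE cts _ onl_li[OF onts]] by simp
    hence "rank E = card (set ts)" unfolding rank_def .
    hence "k = card (set ts)" using assms(2) unfolding mat_rank_def m_def by simp
    also have "\<dots> = card I" using sts card_image[OF injUI] by simp
    finally show ?thesis by simp
  qed
  show ?thesis
    using svdA Isub cardI Ipos injV injUI basisR basisC by blast
qed

end
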